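(* Let $n\in\mathbb{N}$ and $\alpha,\beta>-1$, and put $\sigma:=\alpha+\beta+1$. For every $i=0,1,\ldots,n$, \[ D^n_i(x;\alpha,\beta)=\sum_{j=0}^{n}c_{ij}(n,\alpha,\beta)\,B^n_j(x), \] where the coefficients $c_{ij}(n,\alpha,\beta)$ ($0\le j\le n$) are given by either of the following two (equal) expressions: \[ c_{ij}(n,\alpha,\beta)=\frac{1}{B(\alpha+1,\beta+1)}\sum_{m=0}^n\frac{(2m/\sigma+1)(\beta+1)_m(\sigma)_m}{m!\,(\alpha+1)_m}\,Q_m(i;\beta,\alpha,n)\,Q_m(j;\beta,\alpha,n), \] \[ c_{ij}(n,\alpha,\beta)=\frac{(-1)^{n}(\sigma+1)_{n}(-\alpha-n)_i}{B(\alpha+1,\beta+1)\,n!\,(\beta+1)_i}\sum_{h=0}^{i}\frac{(-i)_h}{(-\alpha-n)_h}\,Q_{n-h}(n-j;\alpha,\beta+h+1,n). \]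
   Context: For $\alpha,\beta>-1$ define the inner product $\langle f,g\rangle:=\int_0^1(1-x)^{\alpha}x^{\beta}f(x)g(x)\,dx$. The Bernstein polynomials of degree $n$ are $B^n_i(x)=\binom ni x^i(1-x)^{n-i}$, $0\le i\le n$. The dual Bernstein polynomials $D^n_0(x;\alpha,\beta),\ldots,D^n_n(x;\alpha,\beta)$ are the unique polynomials of degree at most $n$ with $\langle D^n_i,B^n_j\rangle=\delta_{ij}$ for $i,j=0,\ldots,n$. Notation: $(c)_k:=\prod_{j=0}^{k-1}(c+j)$ (with $(c)_0=1$); $B(\lambda,\mu)=\Gamma(\lambda)\Gamma(\mu)/\Gamma(\lambda+\mu)$; ${}_rF_s$ denotes the generalized hypergeometric series $\sum_{k\ge0}\frac{(a_1)_k\cdots(a_r)_k}{k!(b_1)_k\cdots(b_s)_k}z^k$. The Hahn polynomials are $Q_m(x;a,b,N):={}_3F_2\!\left(-m,\,m+a+b+1,\,-x;\;a+1,\,-N;\;1\right)$ for $m=0,1,\ldots,N$, $N\in\mathbb{N}$ (a terminating sum, since $(-m)_k=0$ for $k>m$). *)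

theory Defs
  imports "HOL-Analysis.Analysis" "HOL-Computational_Algebra.Polynomial"
begin

definition jinner :: "real \<Rightarrow> real \<Rightarrow> (real \<Rightarrow> real) \<Rightarrow> (real \<Rightarrow> real) \<Rightarrow> real" where
  "jinner \<alpha> \<beta> f g = (LINT x:{0..1}|lborel. (1 - x) powr \<alpha> * x powr \<beta> * f x * g x)"

definition bernstein :: "nat \<Rightarrow> nat \<Rightarrow> real \<Rightarrow> real" where
  "bernstein n i x = real (n choose i) * x ^ i * (1 - x) ^ (n - i)"

definition dual_bernstein :: "nat \<Rightarrow> real \<Rightarrow> real \<Rightarrow> nat \<Rightarrow> real poly" where
  "dual_bernstein n \<alpha> \<beta> i = (THE p. degree p \<le> n \<and>
      (\<forall>j\<le>n. jinner \<alpha> \<beta> (poly p) (bernstein n j) = (if i = j then 1 else 0)))"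

text \<open>Hahn polynomials Q_m(x;a,b,N) = 3F2(-m, m+a+b+1, -x; a+1, -N; 1) (terminating sum).\<close>
definition hahnQ :: "nat \<Rightarrow> real \<Rightarrow> real \<Rightarrow> real \<Rightarrow> nat \<Rightarrow> real" where
  "hahnQ m x a b N = (\<Sum>k\<le>m. pochhammer (- real m) k * pochhammer (real m + a + b + 1) k
      * pochhammer (- x) k / (fact k * pochhammer (a + 1) k * pochhammer (- real N) k))"

text \<open>The factor (2m/sigma + 1)(sigma)_m, written in the form that is continuous at sigma = 0:
  it equals 1 for m = 0 and (2m + sigma)(sigma+1)_{m-1} for m >= 1.\<close>
definition hahn_weight_factor :: "real \<Rightarrow> nat \<Rightarrow> real" where
  "hahn_weight_factor \<sigma> m = (if m = 0 then 1 else (2 * real m + \<sigma>) * pochhammer (\<sigma> + 1) (m - 1))"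

definition c_coef1 :: "nat \<Rightarrow> real \<Rightarrow> real \<Rightarrow> nat \<Rightarrow> nat \<Rightarrow> real" where
  "c_coef1 n \<alpha> \<beta> i j = 1 / Beta (\<alpha> + 1) (\<beta> + 1) *
     (\<Sum>m\<le>n. hahn_weight_factor (\<alpha> + \<beta> + 1) m * pochhammer (\<beta> + 1) m
        / (fact m * pochhammer (\<alpha> + 1) m)
        * hahnQ m (real i) \<beta> \<alpha> n * hahnQ m (real j) \<beta> \<alpha> n)"

definition c_coef2 :: "nat \<Rightarrow> real \<Rightarrow> real \<Rightarrow> nat \<Rightarrow> nat \<Rightarrow> real" where
  "c_coef2 n \<alpha> \<beta> i j = (-1) ^ n * pochhammer (\<alpha> + \<beta> + 2) n * pochhammer (- \<alpha> - real n) i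
      / (Beta (\<alpha> + 1) (\<beta> + 1) * fact n * pochhammer (\<beta> + 1) i)
      * (\<Sum>h\<le>i. pochhammer (- real i) h / pochhammer (- \<alpha> - real n) h
           * hahnQ (n - h) (real n - real j) \<alpha> (\<beta> + real h + 1) n)"

end

theory Submission
  imports Defs
begin

lemma beta_int:
  fixes a b :: real
  assumes a: "a > -1" and b: "b > -1"
  shows "set_integrable lborel {0..1} (\<lambda>x. (1 - x) powr a * x powr b * ((1 - x) ^ r * x ^ k))"
    and "(LINT x:{0..1}|lborel. (1 - x) powr a * x powr b * ((1 - x) ^ r * x ^ k))
           = Beta (a + real r + 1) (b + real k + 1)"
proof -
  have eq: "(1 - x) powr a * x powr b * ((1 - x) ^ r * x ^ k)
      = x powr ((b + real k + 1) - 1) * (1 - x) powr ((a + real r + 1) - 1)" if "x \<in> {0..1}" for x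
  proof -
    have 1: "(1 - x) powr a * (1 - x) ^ r = (1 - x) powr (a + real r)"
    proof (cases "x = 1")
      case True then show ?thesis by simp
    next
      case False then have "1 - x > 0" using that by auto
      then show ?thesis by (simp add: powr_add powr_realpow)
    qed
    have 2: "x powr b * x ^ k = x powr (b + real k)"
    proof (cases "x = 0")
      case True then show ?thesis by simp
    next
      case False then have "x > 0" using that by auto
      then show ?thesis by (simp add: powr_add powr_realpow)
    qed
    have "(1 - x) powr a * x powr b * ((1 - x) ^ r * x ^ k)
        = ((1 - x) powr a * (1 - x) ^ r) * (x powr b * x ^ k)" by (simp add: ac_simps)
    also have "\<dots> = x powr ((b + real k + 1) - 1) * (1 - x) powr ((a + real r + 1) - 1)"
      using 1 2 by simp
    finally show ?thesis .
  qed
  have pa: "a + real r + 1 > 0" and pb: "b + real k + 1 > 0" using a b by auto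
  have I: "set_integrable lborel {0..1} (\<lambda>x. x powr ((b + real k + 1) - 1) * (1 - x) powr ((a + real r + 1) - 1))"
    using integrable_Beta[OF pb pa] .
  show "set_integrable lborel {0..1} (\<lambda>x. (1 - x) powr a * x powr b * ((1 - x) ^ r * x ^ k))"
    using I by (subst set_integrable_cong[OF refl refl eq]) auto
  have "(LINT x:{0..1}|lborel. (1 - x) powr a * x powr b * ((1 - x) ^ r * x ^ k))
      = (LINT x:{0..1}|lborel. x powr ((b + real k + 1) - 1) * (1 - x) powr ((a + real r + 1) - 1))"
    using eq by (intro set_lebesgue_integral_cong) auto
  also have "\<dots> = integral {0..1} (\<lambda>x. x powr ((b + real k + 1) - 1) * (1 - x) powr ((a + real r + 1) - 1))"
    using set_borel_integral_eq_integral(2)[OF I] .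
  also have "\<dots> = Beta (b + real k + 1) (a + real r + 1)"
    using has_integral_Beta_real[OF pb pa] by (rule integral_unique)
  finally show "(LINT x:{0..1}|lborel. (1 - x) powr a * x powr b * ((1 - x) ^ r * x ^ k))
           = Beta (a + real r + 1) (b + real k + 1)" by (simp add: Beta_commute)
qed

definition Jf :: "real \<Rightarrow> real \<Rightarrow> real poly \<Rightarrow> real" where
  "Jf a b R = (\<Sum>k\<le>degree R. coeff R k * Beta (a + 1) (b + real k + 1))"

lemma Jf_bound:
  assumes "degree R \<le> N"
  shows "Jf a b R = (\<Sum>k\<le>N. coeff R k * Beta (a + 1) (b + real k + 1))"
  unfolding Jf_def using assms
  by (intro sum.mono_neutral_left) (auto simp: coeff_eq_0)

lemma poly_int:
  fixes a b :: real
  assumes a: "a > -1" and b: "b > -1"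
  shows "set_integrable lborel {0..1} (\<lambda>x. (1 - x) powr a * x powr b * poly R x)"
    and "(LINT x:{0..1}|lborel. (1 - x) powr a * x powr b * poly R x) = Jf a b R"
proof -
  have eq: "(1 - x) powr a * x powr b * poly R x
     = (\<Sum>k\<le>degree R. coeff R k * ((1 - x) powr a * x powr b * ((1 - x) ^ 0 * x ^ k)))" for x
    by (simp add: poly_altdef sum_distrib_left ac_simps)
  have I: "\<And>k. set_integrable lborel {0..1} (\<lambda>x. (1 - x) powr a * x powr b * ((1 - x) ^ 0 * x ^ k))"
    using beta_int(1)[OF a b] .
  have II: "set_integrable lborel {0..1} (\<lambda>x. (\<Sum>k\<le>degree R. coeff R k * ((1 - x) powr a * x powr b * ((1 - x) ^ 0 * x ^ k))))"
  proof -
    have K: "\<And>k. integrable lborel (\<lambda>x. coeff R k * (indicator {0..1} x *\<^sub>R ((1 - x) powr a * x powr b * ((1 - x) ^ 0 * x ^ k))))"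
      using I unfolding set_integrable_def by (intro integrable_mult_right) auto
    have "integrable lborel (\<lambda>x. \<Sum>k\<le>degree R. coeff R k * (indicator {0..1} x *\<^sub>R ((1 - x) powr a * x powr b * ((1 - x) ^ 0 * x ^ k))))"
      by (intro Bochner_Integration.integrable_sum K)
    then show ?thesis unfolding set_integrable_def
      by (simp add: scaleR_sum_right sum_distrib_left ac_simps del: power_0)
  qed
  show "set_integrable lborel {0..1} (\<lambda>x. (1 - x) powr a * x powr b * poly R x)"
    using II by (simp only: eq)
  have "(LINT x:{0..1}|lborel. (1 - x) powr a * x powr b * poly R x)
     = (LINT x:{0..1}|lborel. (\<Sum>k\<le>degree R. coeff R k * ((1 - x) powr a * x powr b * ((1 - x) ^ 0 * x ^ k))))"
    by (simp only: eq)
  also have "\<dots> = (\<Sum>k\<le>degree R. coeff R k * (LINT x:{0..1}|lborel. (1 - x) powr a * x powr b * ((1 - x) ^ 0 * x ^ k)))"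
  proof -
    have K: "\<And>k. integrable lborel (\<lambda>x. coeff R k * (indicator {0..1} x *\<^sub>R ((1 - x) powr a * x powr b * ((1 - x) ^ 0 * x ^ k))))"
      using I unfolding set_integrable_def by (intro integrable_mult_right) auto
    have "integral\<^sup>L lborel (\<lambda>x. \<Sum>k\<le>degree R. coeff R k * (indicator {0..1} x *\<^sub>R ((1 - x) powr a * x powr b * ((1 - x) ^ 0 * x ^ k))))
       = (\<Sum>k\<le>degree R. integral\<^sup>L lborel (\<lambda>x. coeff R k * (indicator {0..1} x *\<^sub>R ((1 - x) powr a * x powr b * ((1 - x) ^ 0 * x ^ k)))))"
      by (intro Bochner_Integration.integral_sum K)
    then show ?thesis unfolding set_lebesgue_integral_def
      by (simp add: scaleR_sum_right sum_distrib_left ac_simps del: power_0)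
  qed
  also have "\<dots> = Jf a b R"
    unfolding Jf_def using beta_int(2)[OF a b, of 0] by simp
  finally show "(LINT x:{0..1}|lborel. (1 - x) powr a * x powr b * poly R x) = Jf a b R" .
qed

lemma jinner_poly:
  assumes "a > -1" "b > -1"
  shows "jinner a b (poly P) (poly Q) = Jf a b (P * Q)"
  unfolding jinner_def using poly_int(2)[OF assms, of "P*Q"] by (simp add: ac_simps)

lemma Jf_add: "Jf a b (P + Q) = Jf a b P + Jf a b Q"
proof -
  let ?N = "max (degree P) (degree Q)"
  have "degree (P + Q) \<le> ?N" by (rule degree_add_le_max)
  then show ?thesis
    by (simp add: Jf_bound[of _ ?N] Jf_bound[of P ?N] Jf_bound[of Q ?N] algebra_simps sum.distrib)
qed

lemma Jf_smult: "Jf a b (smult c P) = c * Jf a b P"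
  by (simp add: Jf_bound[of _ "degree P"] Jf_bound[of P "degree P"] sum_distrib_left ac_simps)

lemma Jf_sum: "finite A \<Longrightarrow> Jf a b (\<Sum>i\<in>A. f i) = (\<Sum>i\<in>A. Jf a b (f i))"
  by (induction A rule: finite_induct) (simp_all add: Jf_add, simp add: Jf_def)

lemma Jf_int:
  assumes "a > -1" "b > -1"
  shows "Jf a b R = (LINT x:{0..1}|lborel. (1 - x) powr a * x powr b * poly R x)"
  using poly_int(2)[OF assms] by simp

lemma Jf_beta:
  assumes "a > -1" "b > -1"
  shows "Jf a b ([:1, -1:] ^ r * monom 1 k) = Beta (a + real r + 1) (b + real k + 1)"
  using beta_int(2)[OF assms, of r k] Jf_int[OF assms]
  by (simp add: poly_monom)

lemma poch_neg_nat: "pochhammer (- real j) r = (-1)^r * fact r * real (j choose r)"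
proof -
  have "pochhammer (- real j) r = (-1)^r * pochhammer (real j - real r + 1) r"
    by (simp add: pochhammer_minus)
  also have "pochhammer (real j - real r + 1) r = fact r * (real j gchoose r)"
    by (simp add: gbinomial_pochhammer')
  also have "real j gchoose r = real (j choose r)"
    by (simp add: binomial_gbinomial)
  finally show ?thesis by simp
qed

lemma bern_choose_sum:
  assumes "r \<le> n"
  shows "(\<Sum>j\<le>n. real (j choose r) * bernstein n j x) = real (n choose r) * x ^ r"
proof -
  have "(\<Sum>j\<le>n. real (j choose r) * bernstein n j x) = (\<Sum>j\<in>{r..n}. real (j choose r) * bernstein n j x)"
    by (intro sum.mono_neutral_right) auto
  also have "\<dots> = (\<Sum>j\<in>{r..n}. real (n choose r) * (real ((n - r) choose (j - r)) * x ^ j * (1 - x) ^ (n - j)))"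
  proof (intro sum.cong refl)
    fix j assume j: "j \<in> {r..n}"
    have "real (j choose r) * real (n choose j) = real (n choose r) * real ((n - r) choose (j - r))"
      using choose_mult[of r j n] j by (simp add: mult.commute flip: of_nat_mult)
    then show "real (j choose r) * bernstein n j x = real (n choose r) * (real ((n - r) choose (j - r)) * x ^ j * (1 - x) ^ (n - j))"
      unfolding bernstein_def by (simp add: algebra_simps)
  qed
  also have "\<dots> = real (n choose r) * (\<Sum>j\<in>{r..n}. real ((n - r) choose (j - r)) * x ^ j * (1 - x) ^ (n - j))"
    by (simp add: sum_distrib_left)
  also have "(\<Sum>j\<in>{r..n}. real ((n - r) choose (j - r)) * x ^ j * (1 - x) ^ (n - j))
      = (\<Sum>t\<in>{0..n-r}. real ((n - r) choose t) * x ^ (t + r) * (1 - x) ^ (n - r - t))"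
  proof -
    have "{r..n} = {0 + r..(n - r) + r}" using assms by simp
    then show ?thesis
      by (simp only: sum.shift_bounds_cl_nat_ivl) (intro sum.cong refl, auto simp: add.commute)
  qed
  also have "\<dots> = x ^ r * (\<Sum>t\<le>n-r. real ((n - r) choose t) * x ^ t * (1 - x) ^ (n - r - t))"
    by (simp add: sum_distrib_left atLeast0AtMost power_add ac_simps)
  also have "(\<Sum>t\<le>n-r. real ((n - r) choose t) * x ^ t * (1 - x) ^ (n - r - t)) = 1"
    using binomial_ring[of x "1 - x" "n - r"] by simp
  finally show ?thesis by simp
qed

lemma fact1:
  assumes "r \<le> n"
  shows "(\<Sum>j\<le>n. pochhammer (- real j) r * bernstein n j x) = pochhammer (- real n) r * x ^ r"
  using bern_choose_sum[OF assms, of x]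
  by (simp add: poch_neg_nat sum_distrib_left flip: sum_distrib_left) (simp add: sum_distrib_left[symmetric] mult.assoc)

lemma bernstein_mirror: "j \<le> n \<Longrightarrow> bernstein n (n - j) (1 - x) = bernstein n j x"
  unfolding bernstein_def by (simp add: binomial_symmetric[symmetric] ac_simps)

lemma fact1_mirror:
  assumes "r \<le> n"
  shows "(\<Sum>j\<le>n. pochhammer (- real (n - j)) r * bernstein n j x) = pochhammer (- real n) r * (1 - x) ^ r"
proof -
  have "(\<Sum>j\<le>n. pochhammer (- real (n - j)) r * bernstein n j x)
      = (\<Sum>j\<le>n. pochhammer (- real (n - j)) r * bernstein n (n - j) (1 - x))"
    by (intro sum.cong refl) (simp add: bernstein_mirror)
  also have "\<dots> = (\<Sum>j\<le>n. pochhammer (- real j) r * bernstein n j (1 - x))"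
    by (rule sum.reindex_bij_witness[where i="\<lambda>j. n - j" and j="\<lambda>j. n - j"]) auto
  also have "\<dots> = pochhammer (- real n) r * (1 - x) ^ r"
    by (rule fact1[OF assms])
  finally show ?thesis .
qed

definition bp :: "nat \<Rightarrow> nat \<Rightarrow> real poly" where
  "bp n j = smult (real (n choose j)) (monom 1 j * [:1, -1:] ^ (n - j))"

lemma poly_bp: "poly (bp n j) x = bernstein n j x"
  unfolding bp_def bernstein_def by (simp add: poly_monom)

lemma degree_bp: "j \<le> n \<Longrightarrow> degree (bp n j) \<le> n"
proof -
  assume "j \<le> n"
  have "degree (monom (1::real) j * [:1, -1:] ^ (n - j)) \<le> j + (n - j)"
    by (rule order.trans[OF degree_mult_le]) (intro add_mono degree_monom_le order.trans[OF degree_power_le], simp)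
  then show ?thesis unfolding bp_def using \<open>j \<le> n\<close> by simp
qed

lemma pos_not_nonpos_Int: "(x::real) > 0 \<Longrightarrow> x \<notin> \<int>\<^sub>\<le>\<^sub>0"
  by (auto elim!: nonpos_Ints_cases)

lemma Beta_shift_left:
  assumes x: "x > 0" and y: "y > 0"
  shows "Beta (x + real l) y = Beta x y * pochhammer x l / pochhammer (x + y) l"
proof (induction l)
  case 0 then show ?case by simp
next
  case (Suc l)
  have xl: "x + real l > 0" using x by simp
  have "(x + real l + y) * Beta (x + real l + 1) y = (x + real l) * Beta (x + real l) y"
    by (rule Beta_plus1_left[OF pos_not_nonpos_Int[OF xl]])
  moreover have "pochhammer (x + y) l > 0" using x y by (intro pochhammer_pos) simp
  moreover have "x + real l + y > 0" using x y by simp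
  ultimately have "Beta (x + real l + 1) y = (x + real l) / (x + real l + y) * Beta (x + real l) y"
    by (simp add: field_simps)
  also have "\<dots> = (x + real l) / (x + real l + y) * (Beta x y * pochhammer x l / pochhammer (x + y) l)"
    using Suc by simp
  also have "\<dots> = Beta x y * pochhammer x (Suc l) / pochhammer (x + y) (Suc l)"
    by (simp add: pochhammer_Suc add_ac mult_ac)
  finally show ?case by (simp add: add_ac)
qed

lemma Beta_shift:
  assumes x: "x > 0" and y: "y > 0"
  shows "Beta (x + real l) (y + real r) = Beta x y * pochhammer x l * pochhammer y r / pochhammer (x + y) (l + r)"
proof -
  have "Beta (x + real l) (y + real r) = Beta (y + real r) (x + real l)" by (rule Beta_commute)
  also have "\<dots> = Beta (y + real r) x * pochhammer x l / pochhammer (x + y + real r) l"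
    using Beta_shift_left[of x "y + real r" l] x y by (simp add: Beta_commute add_ac)
  also have "Beta (y + real r) x = Beta y x * pochhammer y r / pochhammer (x + y) r"
    using Beta_shift_left[of y x r] x y by (simp add: add_ac)
  also have "pochhammer (x + y) (l + r) = pochhammer (x + y) r * pochhammer (x + y + real r) l"
    by (simp add: pochhammer_product' add.commute[of l r])
  ultimately show ?thesis by (simp add: Beta_commute field_simps)
qed

lemma sum_shift_from:
  fixes f :: "nat \<Rightarrow> real"
  assumes "m \<le> k" "\<And>l. l < m \<Longrightarrow> f l = 0"
  shows "(\<Sum>l\<le>k. f l) = (\<Sum>t\<le>k - m. f (m + t))"
proof -
  have "(\<Sum>l\<le>k. f l) = (\<Sum>l\<in>{m..k}. f l)"
    using assms by (intro sum.mono_neutral_right) auto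
  also have "{m..k} = {0 + m..(k - m) + m}" using assms by simp
  also have "(\<Sum>l\<in>{0 + m..(k - m) + m}. f l) = (\<Sum>t\<in>{0..k - m}. f (t + m))"
    by (rule sum.shift_bounds_cl_nat_ivl)
  finally show ?thesis by (simp add: atLeast0AtMost add.commute)
qed

lemma vdm:
  fixes a c :: real
  assumes "\<And>i. i < N \<Longrightarrow> c \<noteq> - real i"
  shows "(\<Sum>t\<le>N. pochhammer a t * pochhammer (- real N) t / (fact t * pochhammer c t))
       = pochhammer (c - a) N / pochhammer c N"
  using Vandermonde_pochhammer[of N c a] assms by (simp add: atLeast0AtMost)

definition wt :: "real \<Rightarrow> real \<Rightarrow> nat \<Rightarrow> real" where
  "wt \<alpha> \<beta> m = hahn_weight_factor (\<alpha> + \<beta> + 1) m * pochhammer (\<beta> + 1) m / (fact m * pochhammer (\<alpha> + 1) m)"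

definition acf :: "real \<Rightarrow> real \<Rightarrow> nat \<Rightarrow> nat \<Rightarrow> real" where
  "acf \<alpha> \<beta> m r = pochhammer (- real m) r * pochhammer (real m + \<beta> + \<alpha> + 1) r / (fact r * pochhammer (\<beta> + 1) r)"

definition PP :: "real \<Rightarrow> real \<Rightarrow> nat \<Rightarrow> real poly" where
  "PP \<alpha> \<beta> m = (\<Sum>r\<le>m. smult (acf \<alpha> \<beta> m r) (monom 1 r))"

definition pc :: "nat \<Rightarrow> real \<Rightarrow> real \<Rightarrow> nat \<Rightarrow> real poly" where
  "pc n \<alpha> \<beta> i = (\<Sum>j\<le>n. smult (c_coef1 n \<alpha> \<beta> i j) (bp n j))"

lemma poch_negn_nz: "k \<le> n \<Longrightarrow> pochhammer (- real n) k \<noteq> 0"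
  using pochhammer_of_nat_eq_0_iff[of n k, where 'a=real] by simp

lemma stepA:
  assumes "m \<le> n"
  shows "(\<Sum>j\<le>n. hahnQ m (real j) \<beta> \<alpha> n * bernstein n j x) = poly (PP \<alpha> \<beta> m) x"
proof -
  have "(\<Sum>j\<le>n. hahnQ m (real j) \<beta> \<alpha> n * bernstein n j x)
      = (\<Sum>j\<le>n. \<Sum>k\<le>m. acf \<alpha> \<beta> m k / pochhammer (- real n) k * (pochhammer (- real j) k * bernstein n j x))"
    unfolding hahnQ_def acf_def sum_distrib_right
    by (intro sum.cong refl) (simp add: mult_ac)
  also have "\<dots> = (\<Sum>k\<le>m. acf \<alpha> \<beta> m k / pochhammer (- real n) k * (\<Sum>j\<le>n. pochhammer (- real j) k * bernstein n j x))"
    by (subst sum.swap) (simp add: sum_distrib_left)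
  also have "\<dots> = (\<Sum>k\<le>m. acf \<alpha> \<beta> m k * x ^ k)"
    using assms by (intro sum.cong refl) (simp add: fact1 poch_negn_nz)
  also have "\<dots> = poly (PP \<alpha> \<beta> m) x"
    unfolding PP_def by (simp add: poly_sum poly_monom)
  finally show ?thesis .
qed

lemma pc_eq:
  "pc n \<alpha> \<beta> i = smult (1 / Beta (\<alpha> + 1) (\<beta> + 1)) (\<Sum>m\<le>n. smult (wt \<alpha> \<beta> m * hahnQ m (real i) \<beta> \<alpha> n) (PP \<alpha> \<beta> m))"
proof -
  have "poly (pc n \<alpha> \<beta> i) x = poly (smult (1 / Beta (\<alpha> + 1) (\<beta> + 1)) (\<Sum>m\<le>n. smult (wt \<alpha> \<beta> m * hahnQ m (real i) \<beta> \<alpha> n) (PP \<alpha> \<beta> m))) x" for x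
  proof -
    have "poly (pc n \<alpha> \<beta> i) x = (\<Sum>j\<le>n. c_coef1 n \<alpha> \<beta> i j * bernstein n j x)"
      unfolding pc_def by (simp add: poly_sum poly_bp)
    also have "\<dots> = 1 / Beta (\<alpha> + 1) (\<beta> + 1) * (\<Sum>m\<le>n. wt \<alpha> \<beta> m * hahnQ m (real i) \<beta> \<alpha> n * (\<Sum>j\<le>n. hahnQ m (real j) \<beta> \<alpha> n * bernstein n j x))"
    proof -
      have "(\<Sum>j\<le>n. c_coef1 n \<alpha> \<beta> i j * bernstein n j x)
         = (\<Sum>j\<le>n. \<Sum>m\<le>n. 1 / Beta (\<alpha> + 1) (\<beta> + 1) * (wt \<alpha> \<beta> m * hahnQ m (real i) \<beta> \<alpha> n * (hahnQ m (real j) \<beta> \<alpha> n * bernstein n j x)))"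
        unfolding c_coef1_def wt_def sum_distrib_right sum_distrib_left
        by (intro sum.cong refl) (simp add: mult_ac)
      also have "\<dots> = (\<Sum>m\<le>n. \<Sum>j\<le>n. 1 / Beta (\<alpha> + 1) (\<beta> + 1) * (wt \<alpha> \<beta> m * hahnQ m (real i) \<beta> \<alpha> n * (hahnQ m (real j) \<beta> \<alpha> n * bernstein n j x)))"
        by (rule sum.swap)
      finally show ?thesis by (simp add: sum_distrib_left)
    qed
    also have "\<dots> = 1 / Beta (\<alpha> + 1) (\<beta> + 1) * (\<Sum>m\<le>n. wt \<alpha> \<beta> m * hahnQ m (real i) \<beta> \<alpha> n * poly (PP \<alpha> \<beta> m) x)"
      by (simp add: stepA)
    finally show ?thesis by (simp add: poly_sum)
  qed
  then show ?thesis by (simp add: poly_eq_poly_eq_iff[symmetric] fun_eq_iff)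
qed

lemma poch_pos: "x > 0 \<Longrightarrow> pochhammer (x::real) k > 0"
  by (intro pochhammer_pos)

lemma M1:
  assumes a: "\<alpha> > -1" and b: "\<beta> > -1"
  shows "Jf \<alpha> \<beta> (PP \<alpha> \<beta> m * [:1, -1:] ^ l) = Beta (\<alpha> + 1) (\<beta> + 1) * pochhammer (\<alpha> + 1) l / pochhammer (\<alpha> + \<beta> + 2) l
          * (pochhammer (real l + 1 - real m) m / pochhammer (\<alpha> + \<beta> + real l + 2) m)"
proof -
  let ?B = "Beta (\<alpha> + 1) (\<beta> + 1)"
  have "PP \<alpha> \<beta> m * [:1, -1:] ^ l = (\<Sum>r\<le>m. smult (acf \<alpha> \<beta> m r) ([:1, -1:] ^ l * monom 1 r))"
    unfolding PP_def sum_distrib_right by (simp add: mult.commute[of "monom 1 _"])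
  then have "Jf \<alpha> \<beta> (PP \<alpha> \<beta> m * [:1, -1:] ^ l) = (\<Sum>r\<le>m. acf \<alpha> \<beta> m r * Beta (\<alpha> + real l + 1) (\<beta> + real r + 1))"
    by (simp add: Jf_sum Jf_smult Jf_beta[OF a b])
  also have "\<dots> = (\<Sum>r\<le>m. ?B * pochhammer (\<alpha> + 1) l / pochhammer (\<alpha> + \<beta> + 2) l *
        (pochhammer (real m + \<beta> + \<alpha> + 1) r * pochhammer (- real m) r / (fact r * pochhammer (\<alpha> + \<beta> + real l + 2) r)))"
  proof (intro sum.cong refl)
    fix r
    have B: "Beta (\<alpha> + real l + 1) (\<beta> + real r + 1) = ?B * pochhammer (\<alpha> + 1) l * pochhammer (\<beta> + 1) r / pochhammer (\<alpha> + \<beta> + 2) (l + r)"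
      using Beta_shift[of "\<alpha> + 1" "\<beta> + 1" l r] a b by (simp add: add_ac)
    have P: "pochhammer (\<alpha> + \<beta> + 2) (l + r) = pochhammer (\<alpha> + \<beta> + 2) l * pochhammer (\<alpha> + \<beta> + real l + 2) r"
      by (simp add: pochhammer_product' add_ac)
    have "pochhammer (\<beta> + 1) r > 0" "pochhammer (\<alpha> + \<beta> + 2) l > 0" "pochhammer (\<alpha> + \<beta> + real l + 2) r > 0"
      using a b by (auto intro!: poch_pos)
    then show "acf \<alpha> \<beta> m r * Beta (\<alpha> + real l + 1) (\<beta> + real r + 1) = ?B * pochhammer (\<alpha> + 1) l / pochhammer (\<alpha> + \<beta> + 2) l *
        (pochhammer (real m + \<beta> + \<alpha> + 1) r * pochhammer (- real m) r / (fact r * pochhammer (\<alpha> + \<beta> + real l + 2) r))"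
      unfolding B P acf_def by (simp add: field_simps)
  qed
  also have "\<dots> = ?B * pochhammer (\<alpha> + 1) l / pochhammer (\<alpha> + \<beta> + 2) l *
        (\<Sum>r\<le>m. pochhammer (real m + \<beta> + \<alpha> + 1) r * pochhammer (- real m) r / (fact r * pochhammer (\<alpha> + \<beta> + real l + 2) r))"
    by (simp add: sum_distrib_left)
  also have "(\<Sum>r\<le>m. pochhammer (real m + \<beta> + \<alpha> + 1) r * pochhammer (- real m) r / (fact r * pochhammer (\<alpha> + \<beta> + real l + 2) r))
      = pochhammer ((\<alpha> + \<beta> + real l + 2) - (real m + \<beta> + \<alpha> + 1)) m / pochhammer (\<alpha> + \<beta> + real l + 2) m"
    using a b by (intro vdm) auto
  also have "(\<alpha> + \<beta> + real l + 2) - (real m + \<beta> + \<alpha> + 1) = real l + 1 - real m" by simp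
  finally show ?thesis .
qed

lemma poch_shift_fact: "pochhammer (real t + 1) m = fact m * real ((t + m) choose m)"
proof -
  have "real ((t + m) choose m) = real (t + m) gchoose m" by (simp add: binomial_gbinomial)
  also have "\<dots> = pochhammer (real (t + m) - real m + 1) m / fact m" by (rule gbinomial_pochhammer')
  finally show ?thesis by simp
qed

lemma hyp2:
  fixes \<alpha> \<beta> :: real
  assumes a: "\<alpha> > -1" and b: "\<beta> > -1"
  shows "(\<Sum>l\<le>k. real (k choose l) * (-1) ^ l * (pochhammer (\<alpha> + 1) l / pochhammer (\<alpha> + \<beta> + 2) l
          * (pochhammer (real l + 1 - real m) m / pochhammer (\<alpha> + \<beta> + real l + 2) m)))
       = pochhammer (\<beta> + 1) k / pochhammer (\<alpha> + \<beta> + 2) k * (pochhammer (\<alpha> + 1) m * pochhammer (- real k) m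
          / (pochhammer (\<beta> + 1) m * pochhammer (\<alpha> + \<beta> + real k + 2) m))"
proof (cases "k < m")
  case True
  have z: "pochhammer (real l + 1 - real m) m = 0" if "l \<le> k" for l
    unfolding pochhammer_eq_0_iff using that True
    by (intro exI[of _ "m - l - 1"]) auto
  have "pochhammer (- real k) m = 0"
    using True pochhammer_of_nat_eq_0_iff[of k m, where 'a=real] by simp
  then show ?thesis using z by simp
next
  case False
  then have mk: "m \<le> k" by simp
  define s where "s = \<alpha> + \<beta> + 2"
  have s: "s > 0" using a b by (simp add: s_def)
  define T0 where "T0 = pochhammer (- real k) m * pochhammer (\<alpha> + 1) m / pochhammer s (2 * m)"
  let ?f = "\<lambda>l. real (k choose l) * (-1) ^ l * (pochhammer (\<alpha> + 1) l / pochhammer (\<alpha> + \<beta> + 2) l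
          * (pochhammer (real l + 1 - real m) m / pochhammer (\<alpha> + \<beta> + real l + 2) m))"
  have z: "?f l = 0" if "l < m" for l
  proof -
    have "pochhammer (real l + 1 - real m) m = 0"
      unfolding pochhammer_eq_0_iff using that by (intro exI[of _ "m - l - 1"]) auto
    then show ?thesis by simp
  qed
  have "(\<Sum>l\<le>k. ?f l) = (\<Sum>t\<le>k - m. ?f (m + t))"
    by (rule sum_shift_from[OF mk z])
  also have "\<dots> = (\<Sum>t\<le>k - m. T0 * (pochhammer (\<alpha> + 1 + real m) t * pochhammer (- real (k - m)) t / (fact t * pochhammer (s + real (2 * m)) t)))"
  proof (intro sum.cong refl)
    fix t assume "t \<in> {..k - m}"
    then have tk: "m + t \<le> k" using mk by simp
    have c1: "real (k choose (m + t)) * real ((m + t) choose m) = real (k choose m) * real ((k - m) choose t)"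
      using choose_mult[of m "m + t" k] tk by (simp flip: of_nat_mult)
    have p1: "pochhammer (real (m + t) + 1 - real m) m = fact m * real ((m + t) choose m)"
      using poch_shift_fact[of t m] by (simp add: add_ac)
    have p2: "pochhammer (- real k) m = (-1) ^ m * fact m * real (k choose m)" by (rule poch_neg_nat)
    have p3: "pochhammer (- real (k - m)) t = (-1) ^ t * fact t * real ((k - m) choose t)" by (rule poch_neg_nat)
    have p4: "pochhammer (\<alpha> + 1) (m + t) = pochhammer (\<alpha> + 1) m * pochhammer (\<alpha> + 1 + real m) t"
      by (rule pochhammer_product')
    have p5: "pochhammer s (m + t) * pochhammer (s + real (m + t)) m = pochhammer s (2 * m) * pochhammer (s + real (2 * m)) t"
    proof -
      have "pochhammer s (m + t) * pochhammer (s + real (m + t)) m = pochhammer s (m + t + m)"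
        by (rule pochhammer_product'[symmetric])
      also have "m + t + m = 2 * m + t" by simp
      also have "pochhammer s (2 * m + t) = pochhammer s (2 * m) * pochhammer (s + real (2 * m)) t"
        by (rule pochhammer_product')
      finally show ?thesis .
    qed
    have pos: "pochhammer s (m + t) > 0" "pochhammer (s + real (m + t)) m > 0" "pochhammer s (2 * m) > 0"
      "pochhammer (s + real (2 * m)) t > 0"
      using s by (auto intro!: poch_pos)
    have e1: "\<alpha> + \<beta> + real (m + t) + 2 = s + real (m + t)" by (simp add: s_def)
    have "?f (m + t) = real (k choose (m + t)) * (-1) ^ (m + t) * (pochhammer (\<alpha> + 1) (m + t) / pochhammer s (m + t)
          * (pochhammer (real (m + t) + 1 - real m) m / pochhammer (s + real (m + t)) m))"
      by (simp only: e1 s_def)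
    also have "\<dots> = (-1) ^ (m + t) * (real (k choose (m + t)) * real ((m + t) choose m)) * fact m * pochhammer (\<alpha> + 1) (m + t)
        / (pochhammer s (m + t) * pochhammer (s + real (m + t)) m)"
      unfolding p1 using pos by (simp add: field_simps)
    also have "\<dots> = T0 * (pochhammer (\<alpha> + 1 + real m) t * pochhammer (- real (k - m)) t / (fact t * pochhammer (s + real (2 * m)) t))"
      unfolding c1 p5 p4 T0_def p2 p3 using pos by (simp add: field_simps power_add)
    finally show "?f (m + t) = T0 * (pochhammer (\<alpha> + 1 + real m) t * pochhammer (- real (k - m)) t / (fact t * pochhammer (s + real (2 * m)) t))" .
  qed
  also have "\<dots> = T0 * (\<Sum>t\<le>k - m. pochhammer (\<alpha> + 1 + real m) t * pochhammer (- real (k - m)) t / (fact t * pochhammer (s + real (2 * m)) t))"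
    by (simp add: sum_distrib_left)
  also have "(\<Sum>t\<le>k - m. pochhammer (\<alpha> + 1 + real m) t * pochhammer (- real (k - m)) t / (fact t * pochhammer (s + real (2 * m)) t))
     = pochhammer ((s + real (2 * m)) - (\<alpha> + 1 + real m)) (k - m) / pochhammer (s + real (2 * m)) (k - m)"
    using s by (intro vdm) auto
  also have "(s + real (2 * m)) - (\<alpha> + 1 + real m) = \<beta> + 1 + real m" by (simp add: s_def)
  finally have L: "(\<Sum>l\<le>k. ?f l) = T0 * (pochhammer (\<beta> + 1 + real m) (k - m) / pochhammer (s + real (2 * m)) (k - m))" .
  have q1: "pochhammer (\<beta> + 1) k = pochhammer (\<beta> + 1) m * pochhammer (\<beta> + 1 + real m) (k - m)"
    by (rule pochhammer_product[OF mk])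
  have q2: "pochhammer s (2 * m) * pochhammer (s + real (2 * m)) (k - m) = pochhammer s k * pochhammer (s + real k) m"
  proof -
    have "pochhammer s (2 * m) * pochhammer (s + real (2 * m)) (k - m) = pochhammer s (2 * m + (k - m))"
      by (simp add: pochhammer_product')
    also have "2 * m + (k - m) = k + m" using mk by simp
    also have "pochhammer s (k + m) = pochhammer s k * pochhammer (s + real k) m"
      by (simp add: pochhammer_product')
    finally show ?thesis .
  qed
  have pos: "pochhammer s (2 * m) > 0" "pochhammer (s + real (2 * m)) (k - m) > 0" "pochhammer s k > 0"
      "pochhammer (s + real k) m > 0" "pochhammer (\<beta> + 1) m > 0"
    using s b by (auto intro!: poch_pos)
  have e2: "\<alpha> + \<beta> + real k + 2 = s + real k" by (simp add: s_def)
  show ?thesis unfolding L T0_def e2 unfolding s_def[symmetric] q1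
  proof -
    have "pochhammer s k * pochhammer (s + real k) m = pochhammer s (2 * m) * pochhammer (s + real (2 * m)) (k - m)"
      using q2 by simp
    then show "pochhammer (- real k) m * pochhammer (\<alpha> + 1) m / pochhammer s (2 * m) *
      (pochhammer (\<beta> + 1 + real m) (k - m) / pochhammer (s + real (2 * m)) (k - m)) =
      pochhammer (\<beta> + 1) m * pochhammer (\<beta> + 1 + real m) (k - m) / pochhammer s k *
      (pochhammer (\<alpha> + 1) m * pochhammer (- real k) m / (pochhammer (\<beta> + 1) m * pochhammer (s + real k) m))"
      using pos by (simp add: field_simps)
  qed
qed

lemma monom_expand:
  "monom (1::real) k = (\<Sum>l\<le>k. smult (real (k choose l) * (-1) ^ l) ([:1, -1:] ^ l))"
proof -
  have "poly (monom (1::real) k) x = poly (\<Sum>l\<le>k. smult (real (k choose l) * (-1) ^ l) ([:1, -1:] ^ l)) x" for x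
  proof -
    have "x ^ k = ((x - 1) + 1) ^ k" by simp
    also have "\<dots> = (\<Sum>l\<le>k. real (k choose l) * (x - 1) ^ l * 1 ^ (k - l))"
      by (rule binomial_ring)
    also have "\<dots> = (\<Sum>l\<le>k. real (k choose l) * (-1) ^ l * (1 - x) ^ l)"
      by (intro sum.cong refl) (simp add: power_mult_distrib[symmetric])
    finally show ?thesis by (simp add: poly_sum poly_monom)
  qed
  then show ?thesis by (simp add: poly_eq_poly_eq_iff[symmetric] fun_eq_iff)
qed

lemma M2:
  assumes a: "\<alpha> > -1" and b: "\<beta> > -1"
  shows "Jf \<alpha> \<beta> (PP \<alpha> \<beta> m * monom 1 k) = Beta (\<alpha> + 1) (\<beta> + 1) *
      (pochhammer (\<beta> + 1) k / pochhammer (\<alpha> + \<beta> + 2) k * (pochhammer (\<alpha> + 1) m * pochhammer (- real k) m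
          / (pochhammer (\<beta> + 1) m * pochhammer (\<alpha> + \<beta> + real k + 2) m)))"
proof -
  have "PP \<alpha> \<beta> m * monom 1 k = (\<Sum>l\<le>k. smult (real (k choose l) * (-1) ^ l) (PP \<alpha> \<beta> m * [:1, -1:] ^ l))"
    by (subst monom_expand) (simp add: sum_distrib_left)
  then have "Jf \<alpha> \<beta> (PP \<alpha> \<beta> m * monom 1 k) = (\<Sum>l\<le>k. real (k choose l) * (-1) ^ l * Jf \<alpha> \<beta> (PP \<alpha> \<beta> m * [:1, -1:] ^ l))"
    by (simp add: Jf_sum Jf_smult)
  also have "\<dots> = Beta (\<alpha> + 1) (\<beta> + 1) * (\<Sum>l\<le>k. real (k choose l) * (-1) ^ l * (pochhammer (\<alpha> + 1) l / pochhammer (\<alpha> + \<beta> + 2) l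
          * (pochhammer (real l + 1 - real m) m / pochhammer (\<alpha> + \<beta> + real l + 2) m)))"
    by (simp add: M1[OF a b] sum_distrib_left mult_ac)
  also have "\<dots> = Beta (\<alpha> + 1) (\<beta> + 1) *
      (pochhammer (\<beta> + 1) k / pochhammer (\<alpha> + \<beta> + 2) k * (pochhammer (\<alpha> + 1) m * pochhammer (- real k) m
          / (pochhammer (\<beta> + 1) m * pochhammer (\<alpha> + \<beta> + real k + 2) m)))"
    by (simp only: hyp2[OF a b])
  finally show ?thesis .
qed

lemma hwf_base: "hahn_weight_factor \<sigma> r * pochhammer (real r + \<sigma>) r = pochhammer (\<sigma> + 1) (2 * r)"
proof (cases r)
  case 0 then show ?thesis by (simp add: hahn_weight_factor_def)
next
  case (Suc q)
  have e: "2 * r = Suc (q + r)" using Suc by simp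
  have "pochhammer (\<sigma> + 1) (2 * r) = pochhammer (\<sigma> + 1) (Suc (q + r))"
    by (simp only: e)
  also have "\<dots> = pochhammer (\<sigma> + 1) (q + r) * (\<sigma> + 1 + real (q + r))"
    by (rule pochhammer_Suc)
  also have "pochhammer (\<sigma> + 1) (q + r) = pochhammer (\<sigma> + 1) q * pochhammer (\<sigma> + 1 + real q) r"
    by (rule pochhammer_product')
  finally show ?thesis using Suc
    by (simp add: hahn_weight_factor_def add_ac mult_ac mult_2)
qed

lemma tel_alg:
  fixes A f D c d1 w q p :: real
  assumes "f \<noteq> 0" "D \<noteq> 0" "c \<noteq> 0" "d1 \<noteq> 0" "d1 * c + w * q = p"
  shows "A / (f * D) + w * (A * q) / (f * d1 * (D * c)) = A * p / (f * d1 * (D * c))"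
proof -
  have "A / (f * D) = A * (d1 * c) / (f * d1 * (D * c))" using assms by (simp add: field_simps)
  also have "\<dots> + w * (A * q) / (f * d1 * (D * c)) = A * (d1 * c + w * q) / (f * d1 * (D * c))"
    by (simp add: add_divide_distrib algebra_simps)
  finally show ?thesis using assms(5) by simp
qed

lemma tel:
  fixes \<sigma> :: real
  assumes s: "\<sigma> > -1"
  shows "(\<Sum>m\<in>{r..r+d}. hahn_weight_factor \<sigma> m * pochhammer (real m + \<sigma>) r * pochhammer (- real k) m
            / (fact (m - r) * pochhammer (\<sigma> + real k + 1) m))
       = pochhammer (\<sigma> + 1) (2 * r + d) * pochhammer (- real k) r * pochhammer (1 + real r - real k) d
            / (fact d * pochhammer (\<sigma> + real k + 1) (r + d))"
proof (induction d)
  case 0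
  show ?case using hwf_base[of \<sigma> r] by simp
next
  case (Suc d)
  define u where "u = Suc (r + d)"
  have sk: "\<sigma> + real k + 1 > 0" using s by simp
  have pos: "pochhammer (\<sigma> + real k + 1) (r + d) > 0" using sk by (intro poch_pos)
  have pos2: "\<sigma> + real k + 1 + real (r + d) > 0" using sk by simp
  have h1: "hahn_weight_factor \<sigma> u = (2 * real u + \<sigma>) * pochhammer (\<sigma> + 1) (r + d)"
    by (simp add: hahn_weight_factor_def u_def)
  have h2: "pochhammer (\<sigma> + 1) (r + d) * pochhammer (real u + \<sigma>) r = pochhammer (\<sigma> + 1) (2 * r + d)"
  proof -
    have e: "\<sigma> + 1 + real (r + d) = real u + \<sigma>" by (simp add: u_def)
    have h2': "pochhammer (\<sigma> + 1) (r + d + r) = pochhammer (\<sigma> + 1) (r + d) * pochhammer (real u + \<sigma>) r"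
      using pochhammer_product'[of "\<sigma> + 1" "r + d" r] unfolding e .
    have "r + d + r = 2 * r + d" by simp
    then show ?thesis using h2' by metis
  qed
  have h3: "pochhammer (- real k) u = pochhammer (- real k) r * ((real r - real k) * pochhammer (1 + real r - real k) d)"
  proof -
    have "pochhammer (- real k) (r + Suc d) = pochhammer (- real k) r * pochhammer (- real k + real r) (Suc d)"
      by (rule pochhammer_product')
    also have "pochhammer (- real k + real r) (Suc d) = (- real k + real r) * pochhammer (- real k + real r + 1) d"
      by (rule pochhammer_rec)
    also have "- real k + real r + 1 = 1 + real r - real k" by simp
    also have "r + Suc d = u" by (simp add: u_def)
    finally show ?thesis by simp
  qed
  have h4: "pochhammer (\<sigma> + real k + 1) u = pochhammer (\<sigma> + real k + 1) (r + d) * (\<sigma> + real k + 1 + real (r + d))"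
    by (simp add: u_def pochhammer_Suc)
  have h5: "pochhammer (\<sigma> + 1) (2 * r + Suc d) = pochhammer (\<sigma> + 1) (2 * r + d) * (\<sigma> + 1 + real (2 * r + d))"
    by (simp add: pochhammer_Suc)
  have h6: "pochhammer (1 + real r - real k) (Suc d) = pochhammer (1 + real r - real k) d * (1 + real r - real k + real d)"
    by (simp add: pochhammer_Suc)
  have fu: "fact (u - r) = fact d * (real d + 1)"
    by (simp add: u_def fact_Suc algebra_simps)
  have "(\<Sum>m\<in>{r..r + Suc d}. hahn_weight_factor \<sigma> m * pochhammer (real m + \<sigma>) r * pochhammer (- real k) m
            / (fact (m - r) * pochhammer (\<sigma> + real k + 1) m))
     = (\<Sum>m\<in>{r..r+d}. hahn_weight_factor \<sigma> m * pochhammer (real m + \<sigma>) r * pochhammer (- real k) m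
            / (fact (m - r) * pochhammer (\<sigma> + real k + 1) m))
       + hahn_weight_factor \<sigma> u * pochhammer (real u + \<sigma>) r * pochhammer (- real k) u
            / (fact (u - r) * pochhammer (\<sigma> + real k + 1) u)"
    by (simp add: u_def)
  also have "\<dots> = (pochhammer (\<sigma> + 1) (2 * r + d) * pochhammer (- real k) r * pochhammer (1 + real r - real k) d)
            / (fact d * pochhammer (\<sigma> + real k + 1) (r + d))
       + (2 * real u + \<sigma>) * ((pochhammer (\<sigma> + 1) (2 * r + d) * pochhammer (- real k) r * pochhammer (1 + real r - real k) d) * (real r - real k))
            / (fact d * (real d + 1) * (pochhammer (\<sigma> + real k + 1) (r + d) * (\<sigma> + real k + 1 + real (r + d))))"
    unfolding Suc.IH h3 h4 fu h1 h2[symmetric] by (simp add: mult_ac)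
  also have "\<dots> = (pochhammer (\<sigma> + 1) (2 * r + d) * pochhammer (- real k) r * pochhammer (1 + real r - real k) d)
         * ((\<sigma> + 1 + real (2 * r + d)) * (1 + real r - real k + real d))
            / (fact d * (real d + 1) * (pochhammer (\<sigma> + real k + 1) (r + d) * (\<sigma> + real k + 1 + real (r + d))))"
  proof (rule tel_alg)
    show "fact d \<noteq> (0::real)" by simp
    show "pochhammer (\<sigma> + real k + 1) (r + d) \<noteq> 0" using pos by simp
    show "\<sigma> + real k + 1 + real (r + d) \<noteq> 0" using pos2 by simp
    show "real d + 1 \<noteq> 0" by simp
    show "(real d + 1) * (\<sigma> + real k + 1 + real (r + d)) + (2 * real u + \<sigma>) * (real r - real k)
        = (\<sigma> + 1 + real (2 * r + d)) * (1 + real r - real k + real d)"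
      by (simp add: u_def algebra_simps)
  qed
  also have "\<dots> = pochhammer (\<sigma> + 1) (2 * r + Suc d) * pochhammer (- real k) r * pochhammer (1 + real r - real k) (Suc d)
            / (fact (Suc d) * pochhammer (\<sigma> + real k + 1) (r + Suc d))"
  proof -
    have X1: "pochhammer (\<sigma> + 1) (2 * r + Suc d) = pochhammer (\<sigma> + 1) (2 * r + d) * (\<sigma> + 1 + real (2 * r + d))"
      by (simp only: add_Suc_right pochhammer_Suc)
    have X2: "pochhammer (\<sigma> + real k + 1) (r + Suc d) = pochhammer (\<sigma> + real k + 1) (r + d) * (\<sigma> + real k + 1 + real (r + d))"
      by (simp only: add_Suc_right pochhammer_Suc)
    have X3: "fact (Suc d) = fact d * (real d + (1::real))" by (simp add: fact_Suc)
    show ?thesis unfolding X1 X2 X3 h6 by (simp only: mult_ac)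
  qed
  finally show ?case .
qed

lemma Beta_pos: "x > 0 \<Longrightarrow> y > 0 \<Longrightarrow> Beta x y > (0::real)"
  unfolding Beta_def by simp

lemma poch_negm_fact:
  assumes "r \<le> m"
  shows "pochhammer (- real m) r / fact m = (-1) ^ r / fact (m - r)"
proof -
  have "pochhammer (- real m) r = (-1) ^ r * (fact r * real (m choose r))" by (simp add: poch_neg_nat)
  also have "fact r * real (m choose r) = fact m / fact (m - r)" by (rule fact_binomial[OF assms])
  finally show ?thesis by simp
qed

lemma inner_sum:
  fixes \<sigma> :: real
  assumes s: "\<sigma> > -1" and kn: "k \<le> n" and rn: "r \<le> n"
  shows "(\<Sum>m\<le>n. hahn_weight_factor \<sigma> m * pochhammer (- real k) m * pochhammer (- real m) r * pochhammer (real m + \<sigma>) r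
            / (fact m * pochhammer (\<sigma> + real k + 1) m))
       = (if r = k then fact k * pochhammer (\<sigma> + 1) k else 0)"
proof -
  let ?f = "\<lambda>m. hahn_weight_factor \<sigma> m * pochhammer (- real k) m * pochhammer (- real m) r * pochhammer (real m + \<sigma>) r
            / (fact m * pochhammer (\<sigma> + real k + 1) m)"
  have z: "?f m = 0" if "m < r" for m
    using that pochhammer_of_nat_eq_0_iff[of m r, where 'a=real] by simp
  have "(\<Sum>m\<le>n. ?f m) = (\<Sum>m\<in>{r..r + (n - r)}. ?f m)"
    using rn by (intro sum.mono_neutral_right ballI z) auto
  also have "\<dots> = (\<Sum>m\<in>{r..r + (n - r)}. (-1) ^ r * (hahn_weight_factor \<sigma> m * pochhammer (real m + \<sigma>) r * pochhammer (- real k) m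
            / (fact (m - r) * pochhammer (\<sigma> + real k + 1) m)))"
  proof (intro sum.cong refl)
    fix m assume "m \<in> {r..r + (n - r)}"
    then have rm: "r \<le> m" by simp
    have "?f m = hahn_weight_factor \<sigma> m * pochhammer (- real k) m * pochhammer (real m + \<sigma>) r
            / pochhammer (\<sigma> + real k + 1) m * (pochhammer (- real m) r / fact m)"
      by (simp add: field_simps)
    also have "\<dots> = (-1) ^ r * (hahn_weight_factor \<sigma> m * pochhammer (real m + \<sigma>) r * pochhammer (- real k) m
            / (fact (m - r) * pochhammer (\<sigma> + real k + 1) m))"
      unfolding poch_negm_fact[OF rm] by (simp add: field_simps)
    finally show "?f m = \<dots>" .
  qed
  also have "\<dots> = (-1) ^ r * (pochhammer (\<sigma> + 1) (2 * r + (n - r)) * pochhammer (- real k) r * pochhammer (1 + real r - real k) (n - r)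
            / (fact (n - r) * pochhammer (\<sigma> + real k + 1) (r + (n - r))))"
    by (simp only: sum_distrib_left[symmetric] tel[OF s])
  also have "\<dots> = (if r = k then fact k * pochhammer (\<sigma> + 1) k else 0)"
  proof (cases "r = k")
    case True
    have a1: "pochhammer (1 + real r - real k) (n - r) = fact (n - r)"
      using True by (simp add: pochhammer_fact)
    have a2: "pochhammer (\<sigma> + 1) (2 * r + (n - r)) = pochhammer (\<sigma> + 1) k * pochhammer (\<sigma> + real k + 1) (r + (n - r))"
    proof -
      have "2 * r + (n - r) = k + n" using True rn by simp
      moreover have "pochhammer (\<sigma> + 1) (k + n) = pochhammer (\<sigma> + 1) k * pochhammer (\<sigma> + 1 + real k) n"
        by (rule pochhammer_product')
      moreover have "r + (n - r) = n" using rn by simp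
      ultimately show ?thesis by (simp add: add_ac)
    qed
    have a3: "pochhammer (- real k) r = (-1) ^ k * fact k"
      using True by (simp add: pochhammer_same)
    have pos: "pochhammer (\<sigma> + real k + 1) (r + (n - r)) > 0" using s by (intro poch_pos) simp
    show ?thesis using True pos unfolding a1 a2 a3
      by (simp add: field_simps power_add[symmetric] mult_2[symmetric])
  next
    case False
    show ?thesis
    proof (cases "r < k")
      case True
      have "pochhammer (1 + real r - real k) (n - r) = 0"
        unfolding pochhammer_eq_0_iff using True kn by (intro exI[of _ "k - r - 1"]) auto
      then show ?thesis using False by simp
    next
      case False': False
      then have "k < r" using False by simp
      then have "pochhammer (- real k) r = 0"
        using pochhammer_of_nat_eq_0_iff[of k r, where 'a=real] by simp
      then show ?thesis using False by simp
    qed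
  qed
  finally show ?thesis .
qed

lemma hahnQ_ext:
  assumes "m \<le> n"
  shows "hahnQ m (real i) \<beta> \<alpha> n = (\<Sum>r\<le>n. pochhammer (- real m) r * pochhammer (real m + (\<alpha> + \<beta> + 1)) r
     * (pochhammer (- real i) r / (fact r * pochhammer (\<beta> + 1) r * pochhammer (- real n) r)))"
proof -
  have "hahnQ m (real i) \<beta> \<alpha> n = (\<Sum>r\<le>m. pochhammer (- real m) r * pochhammer (real m + (\<alpha> + \<beta> + 1)) r
     * (pochhammer (- real i) r / (fact r * pochhammer (\<beta> + 1) r * pochhammer (- real n) r)))"
    unfolding hahnQ_def by (intro sum.cong refl) (simp add: add_ac)
  also have "\<dots> = (\<Sum>r\<le>n. pochhammer (- real m) r * pochhammer (real m + (\<alpha> + \<beta> + 1)) r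
     * (pochhammer (- real i) r / (fact r * pochhammer (\<beta> + 1) r * pochhammer (- real n) r)))"
    using assms pochhammer_of_nat_eq_0_iff[of m _, where 'a=real]
    by (intro sum.mono_neutral_left) auto
  finally show ?thesis .
qed

lemma stepC:
  assumes a: "\<alpha> > -1" and b: "\<beta> > -1" and kn: "k \<le> n"
  shows "Jf \<alpha> \<beta> (pc n \<alpha> \<beta> i * monom 1 k) = pochhammer (- real i) k / pochhammer (- real n) k"
proof -
  define B where "B = Beta (\<alpha> + 1) (\<beta> + 1)"
  define \<sigma> where "\<sigma> = \<alpha> + \<beta> + 1"
  have s: "\<sigma> > -1" using a b by (simp add: \<sigma>_def)
  have Bp: "B > 0" unfolding B_def using a b by (intro Beta_pos) auto
  define Ck where "Ck = pochhammer (\<beta> + 1) k / pochhammer (\<alpha> + \<beta> + 2) k"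
  define X where "X = (\<lambda>m. hahn_weight_factor \<sigma> m * pochhammer (- real k) m / (fact m * pochhammer (\<sigma> + real k + 1) m))"
  define Y where "Y = (\<lambda>m r. pochhammer (- real m) r * pochhammer (real m + \<sigma>) r)"
  define Z where "Z = (\<lambda>r. pochhammer (- real i) r / (fact r * pochhammer (\<beta> + 1) r * pochhammer (- real n) r))"
  have "pc n \<alpha> \<beta> i * monom 1 k = smult (1 / B) (\<Sum>m\<le>n. smult (wt \<alpha> \<beta> m * hahnQ m (real i) \<beta> \<alpha> n) (PP \<alpha> \<beta> m * monom 1 k))"
    unfolding pc_eq B_def by (simp add: sum_distrib_right)
  then have "Jf \<alpha> \<beta> (pc n \<alpha> \<beta> i * monom 1 k) = 1 / B * (\<Sum>m\<le>n. wt \<alpha> \<beta> m * hahnQ m (real i) \<beta> \<alpha> n * Jf \<alpha> \<beta> (PP \<alpha> \<beta> m * monom 1 k))"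
    by (simp add: Jf_smult Jf_sum)
  also have "\<dots> = (\<Sum>m\<le>n. (Ck * X m) * (\<Sum>r\<le>n. Y m r * Z r))"
  proof -
    have "1 / B * (wt \<alpha> \<beta> m * hahnQ m (real i) \<beta> \<alpha> n * Jf \<alpha> \<beta> (PP \<alpha> \<beta> m * monom 1 k)) = (Ck * X m) * (\<Sum>r\<le>n. Y m r * Z r)"
      if m: "m \<in> {..n}" for m
    proof -
      have Q: "hahnQ m (real i) \<beta> \<alpha> n = (\<Sum>r\<le>n. Y m r * Z r)"
        unfolding Y_def Z_def \<sigma>_def using m by (simp add: hahnQ_ext mult.assoc)
      have e: "\<alpha> + \<beta> + real k + 2 = \<sigma> + real k + 1" by (simp add: \<sigma>_def)
      have pos: "pochhammer (\<alpha> + 1) m > 0" "pochhammer (\<beta> + 1) m > 0"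
        using a b by (auto intro!: poch_pos)
      show ?thesis unfolding Q M2[OF a b] e B_def[symmetric] wt_def X_def Ck_def \<sigma>_def[symmetric]
        using Bp pos by (simp add: field_simps)
    qed
    then show ?thesis by (simp add: sum_distrib_left)
  qed
  also have "\<dots> = Ck * (\<Sum>r\<le>n. Z r * (\<Sum>m\<le>n. X m * Y m r))"
    by (simp add: sum_distrib_left sum_distrib_right mult_ac) (rule sum.swap)
  also have "\<dots> = Ck * (\<Sum>r\<le>n. Z r * (if r = k then fact k * pochhammer (\<sigma> + 1) k else 0))"
  proof -
    have "(\<Sum>m\<le>n. X m * Y m r) = (if r = k then fact k * pochhammer (\<sigma> + 1) k else 0)" if "r \<in> {..n}" for r
      using inner_sum[OF s kn, of r] that unfolding X_def Y_def by (simp add: mult_ac)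
    then show ?thesis by simp
  qed
  also have "\<dots> = Ck * (Z k * (fact k * pochhammer (\<sigma> + 1) k))"
  proof -
    have "(\<Sum>r\<le>n. Z r * (if r = k then fact k * pochhammer (\<sigma> + 1) k else 0))
        = (\<Sum>r\<in>{k}. Z r * (if r = k then fact k * pochhammer (\<sigma> + 1) k else 0))"
      using kn by (intro sum.mono_neutral_right) auto
    then show ?thesis by simp
  qed
  also have "\<dots> = pochhammer (- real i) k / pochhammer (- real n) k"
  proof -
    have "\<sigma> + 1 = \<alpha> + \<beta> + 2" by (simp add: \<sigma>_def)
    moreover have "pochhammer (\<alpha> + \<beta> + 2) k > 0" "pochhammer (\<beta> + 1) k > 0"
      using a b by (auto intro!: poch_pos)
    moreover have "pochhammer (- real n) k \<noteq> 0" using kn by (rule poch_negn_nz)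
    ultimately show ?thesis unfolding Ck_def Z_def by (simp add: field_simps)
  qed
  finally show ?thesis .
qed

lemma bp_expand:
  "bp n j = (\<Sum>l\<le>n - j. smult (real (n choose j) * real ((n - j) choose l) * (-1) ^ l) (monom 1 (j + l)))"
proof -
  have "poly (bp n j) x = poly (\<Sum>l\<le>n - j. smult (real (n choose j) * real ((n - j) choose l) * (-1) ^ l) (monom 1 (j + l))) x" for x
  proof -
    have "(1 - x) ^ (n - j) = (- x + 1) ^ (n - j)" by simp
    also have "\<dots> = (\<Sum>l\<le>n - j. real ((n - j) choose l) * (- x) ^ l * 1 ^ (n - j - l))"
      by (rule binomial_ring)
    finally have "(1 - x) ^ (n - j) = (\<Sum>l\<le>n - j. real ((n - j) choose l) * (-1) ^ l * x ^ l)"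
      by (simp only: power_minus[of x] power_one mult_1_right mult_1_left mult_ac)
    then show ?thesis
      by (simp add: poly_bp bernstein_def poly_sum poly_monom sum_distrib_left power_add mult_ac)
  qed
  then show ?thesis by (simp add: poly_eq_poly_eq_iff[symmetric] fun_eq_iff)
qed

lemma chooseid: "(i choose (j + l)) * ((j + l) choose j) = (i choose j) * ((i - j) choose l)"
proof (cases "j + l \<le> i")
  case True then show ?thesis using choose_mult[of j "j + l" i] by simp
next
  case False
  then show ?thesis
  proof (cases "j \<le> i")
    case True
    with False have "i - j < l" by simp
    then show ?thesis using False by (simp add: binomial_eq_0)
  next
    case False
    then show ?thesis using \<open>\<not> j + l \<le> i\<close> by (simp add: binomial_eq_0)
  qed
qed

lemma poch_ratio:
  assumes "t \<le> n"
  shows "pochhammer (- real i) t / pochhammer (- real n) t = real (i choose t) / real (n choose t)"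
proof -
  have "real (n choose t) \<noteq> 0" using assms by simp
  then show ?thesis by (simp add: poch_neg_nat)
qed

lemma stepD:
  assumes mom: "\<And>k. k \<le> n \<Longrightarrow> Jf \<alpha> \<beta> (p * monom 1 k) = pochhammer (- real i) k / pochhammer (- real n) k"
    and jn: "j \<le> n" and inn: "i \<le> n"
  shows "Jf \<alpha> \<beta> (p * bp n j) = (if i = j then 1 else 0)"
proof -
  have "Jf \<alpha> \<beta> (p * bp n j) = (\<Sum>l\<le>n - j. real (n choose j) * real ((n - j) choose l) * (-1) ^ l * Jf \<alpha> \<beta> (p * monom 1 (j + l)))"
    by (simp add: bp_expand sum_distrib_left Jf_sum Jf_smult)
  also have "\<dots> = (\<Sum>l\<le>n - j. (-1) ^ l * real (i choose j) * real ((i - j) choose l))"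
  proof (intro sum.cong refl)
    fix l assume "l \<in> {..n - j}"
    then have t: "j + l \<le> n" using jn by simp
    have c1: "real (n choose (j + l)) * real ((j + l) choose j) = real (n choose j) * real ((n - j) choose l)"
      using choose_mult[of j "j + l" n] t by (simp flip: of_nat_mult)
    have c2: "real (i choose (j + l)) * real ((j + l) choose j) = real (i choose j) * real ((i - j) choose l)"
      using chooseid[of i j l] by (simp flip: of_nat_mult)
    have nz: "real (n choose (j + l)) \<noteq> 0" using t by simp
    have "real (n choose j) * real ((n - j) choose l) * (-1) ^ l * Jf \<alpha> \<beta> (p * monom 1 (j + l))
        = (-1) ^ l * (real (n choose (j + l)) * real ((j + l) choose j)) * (real (i choose (j + l)) / real (n choose (j + l)))"
      unfolding mom[OF t] poch_ratio[OF t] c1 by (simp add: mult_ac)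
    also have "\<dots> = (-1) ^ l * (real (i choose (j + l)) * real ((j + l) choose j))"
      using nz by (simp add: field_simps)
    also have "\<dots> = (-1) ^ l * real (i choose j) * real ((i - j) choose l)"
      unfolding c2 by (simp add: mult_ac)
    finally show "real (n choose j) * real ((n - j) choose l) * (-1) ^ l * Jf \<alpha> \<beta> (p * monom 1 (j + l))
        = (-1) ^ l * real (i choose j) * real ((i - j) choose l)" .
  qed
  also have "\<dots> = (if i = j then 1 else 0)"
  proof (cases "j \<le> i")
    case False
    then show ?thesis by (simp add: binomial_eq_0)
  next
    case True
    have "(\<Sum>l\<le>n - j. (-1) ^ l * real (i choose j) * real ((i - j) choose l))
        = real (i choose j) * (\<Sum>l\<le>n - j. (-1) ^ l * real ((i - j) choose l))"
      by (simp add: sum_distrib_left mult_ac)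
    also have "(\<Sum>l\<le>n - j. (-1) ^ l * real ((i - j) choose l)) = (\<Sum>l\<le>i - j. (-1) ^ l * real ((i - j) choose l))"
    proof -
      have "i - j \<le> n - j" using inn by simp
      then show ?thesis by (intro sum.mono_neutral_right) auto
    qed
    also have "\<dots> = (if i = j then 1 else 0)"
    proof (cases "i = j")
      case True then show ?thesis by simp
    next
      case False
      then have "i - j > 0" using \<open>j \<le> i\<close> by simp
      then show ?thesis using choose_alternating_sum[of "i - j", where 'a=real] False by simp
    qed
    finally show ?thesis by simp
  qed
  finally show ?thesis .
qed

definition Gm :: "real \<Rightarrow> real \<Rightarrow> nat \<Rightarrow> nat \<Rightarrow> nat \<Rightarrow> real" where
  "Gm \<alpha> \<beta> n l j = Jf \<alpha> \<beta> (bp n l * bp n j)"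

lemma Gm_sym: "Gm \<alpha> \<beta> n l j = Gm \<alpha> \<beta> n j l"
  unfolding Gm_def by (simp add: mult.commute)

lemma c1_sym: "c_coef1 n \<alpha> \<beta> i j = c_coef1 n \<alpha> \<beta> j i"
  unfolding c_coef1_def by (simp add: mult_ac)

lemma Jf_comb:
  "Jf \<alpha> \<beta> ((\<Sum>l\<le>n. smult (b l) (bp n l)) * bp n j) = (\<Sum>l\<le>n. b l * Gm \<alpha> \<beta> n l j)"
  unfolding Gm_def by (simp add: sum_distrib_right Jf_sum Jf_smult)

lemma exist1:
  assumes a: "\<alpha> > -1" and b: "\<beta> > -1" and "i \<le> n" "j \<le> n"
  shows "(\<Sum>l\<le>n. c_coef1 n \<alpha> \<beta> i l * Gm \<alpha> \<beta> n l j) = (if i = j then 1 else 0)"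
proof -
  have "(\<Sum>l\<le>n. c_coef1 n \<alpha> \<beta> i l * Gm \<alpha> \<beta> n l j) = Jf \<alpha> \<beta> (pc n \<alpha> \<beta> i * bp n j)"
    unfolding pc_def by (rule Jf_comb[symmetric])
  also have "\<dots> = (if i = j then 1 else 0)"
    by (rule stepD[OF stepC[OF a b] assms(4) assms(3)])
  finally show ?thesis .
qed

lemma recover:
  assumes a: "\<alpha> > -1" and b: "\<beta> > -1" and mn: "m \<le> n"
  shows "b m = (\<Sum>j\<le>n. c_coef1 n \<alpha> \<beta> m j * (\<Sum>l\<le>n. b l * Gm \<alpha> \<beta> n l j))"
proof -
  have "(\<Sum>j\<le>n. c_coef1 n \<alpha> \<beta> m j * (\<Sum>l\<le>n. b l * Gm \<alpha> \<beta> n l j))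
      = (\<Sum>l\<le>n. b l * (\<Sum>j\<le>n. c_coef1 n \<alpha> \<beta> m j * Gm \<alpha> \<beta> n j l))"
  proof -
    have "(\<Sum>j\<le>n. c_coef1 n \<alpha> \<beta> m j * (\<Sum>l\<le>n. b l * Gm \<alpha> \<beta> n l j))
        = (\<Sum>j\<le>n. \<Sum>l\<le>n. c_coef1 n \<alpha> \<beta> m j * (b l * Gm \<alpha> \<beta> n l j))"
      by (simp add: sum_distrib_left)
    also have "\<dots> = (\<Sum>l\<le>n. \<Sum>j\<le>n. c_coef1 n \<alpha> \<beta> m j * (b l * Gm \<alpha> \<beta> n l j))"
      by (rule sum.swap)
    also have "\<dots> = (\<Sum>l\<le>n. b l * (\<Sum>j\<le>n. c_coef1 n \<alpha> \<beta> m j * Gm \<alpha> \<beta> n j l))"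
      by (intro sum.cong refl) (simp add: sum_distrib_left Gm_sym mult_ac)
    finally show ?thesis .
  qed
  also have "\<dots> = (\<Sum>l\<le>n. b l * (if m = l then 1 else 0))"
    using exist1[OF a b mn] by simp
  also have "\<dots> = b m"
  proof -
    have "(\<Sum>l\<le>n. b l * (if m = l then 1 else 0)) = (\<Sum>l\<in>{m}. b l * (if m = l then 1 else 0))"
      using mn by (intro sum.mono_neutral_right) auto
    then show ?thesis by simp
  qed
  finally show ?thesis by simp
qed

definition bc :: "nat \<Rightarrow> real poly \<Rightarrow> nat \<Rightarrow> real" where
  "bc n q l = (\<Sum>k\<le>n. coeff q k * (pochhammer (- real l) k / pochhammer (- real n) k))"

lemma span:
  assumes "degree q \<le> n"
  shows "q = (\<Sum>l\<le>n. smult (bc n q l) (bp n l))"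
proof -
  have "poly q x = poly (\<Sum>l\<le>n. smult (bc n q l) (bp n l)) x" for x
  proof -
    have "poly q x = (\<Sum>k\<le>n. coeff q k * x ^ k)"
      unfolding poly_altdef using assms
      by (intro sum.mono_neutral_left) (auto simp: coeff_eq_0)
    also have "\<dots> = (\<Sum>k\<le>n. coeff q k * (\<Sum>l\<le>n. pochhammer (- real l) k / pochhammer (- real n) k * bernstein n l x))"
    proof (intro sum.cong refl)
      fix k assume "k \<in> {..n}"
      then have k: "k \<le> n" by simp
      have "(\<Sum>l\<le>n. pochhammer (- real l) k / pochhammer (- real n) k * bernstein n l x)
          = (\<Sum>l\<le>n. pochhammer (- real l) k * bernstein n l x) / pochhammer (- real n) k"
        by (simp add: sum_divide_distrib)
      also have "\<dots> = x ^ k" using fact1[OF k] poch_negn_nz[OF k] by simp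
      finally show "coeff q k * x ^ k = coeff q k * (\<Sum>l\<le>n. pochhammer (- real l) k / pochhammer (- real n) k * bernstein n l x)"
        by simp
    qed
    also have "\<dots> = (\<Sum>l\<le>n. bc n q l * bernstein n l x)"
      unfolding bc_def by (simp add: sum_distrib_left sum_distrib_right mult_ac) (rule sum.swap)
    finally show ?thesis by (simp add: poly_sum poly_bp)
  qed
  then show ?thesis by (simp add: poly_eq_poly_eq_iff[symmetric] fun_eq_iff)
qed

lemma degree_comb: "degree (\<Sum>l\<le>n. smult (b l) (bp n l)) \<le> n"
  by (intro degree_sum_le order.trans[OF degree_smult_le] degree_bp) auto

lemma bernstein_poly: "bernstein n j = poly (bp n j)"
  by (simp add: fun_eq_iff poly_bp)

lemma delta_sum:
  fixes n :: nat
  assumes "i \<le> n"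
  shows "(\<Sum>j\<le>n. f j * (if i = j then 1 else 0)) = (f i :: real)"
proof -
  have "(\<Sum>j\<le>n. f j * (if i = j then 1 else 0)) = (\<Sum>j\<in>{i}. f j * (if i = j then 1 else 0))"
    using assms by (intro sum.mono_neutral_right) auto
  then show ?thesis by simp
qed

lemma coef_unique:
  assumes a: "\<alpha> > -1" and b: "\<beta> > -1" and i: "i \<le> n"
    and h: "\<And>j. j \<le> n \<Longrightarrow> (\<Sum>l\<le>n. bb l * Gm \<alpha> \<beta> n l j) = (if i = j then 1 else 0)"
    and m: "m \<le> n"
  shows "bb m = c_coef1 n \<alpha> \<beta> i m"
proof -
  have "bb m = (\<Sum>j\<le>n. c_coef1 n \<alpha> \<beta> m j * (\<Sum>l\<le>n. bb l * Gm \<alpha> \<beta> n l j))"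
    by (rule recover[OF a b m])
  also have "\<dots> = (\<Sum>j\<le>n. c_coef1 n \<alpha> \<beta> m j * (if i = j then 1 else 0))"
    using h by simp
  also have "\<dots> = c_coef1 n \<alpha> \<beta> m i" by (rule delta_sum[OF i])
  finally show ?thesis by (simp add: c1_sym)
qed

lemma dual_eq:
  assumes a: "\<alpha> > -1" and b: "\<beta> > -1" and i: "i \<le> n"
  shows "dual_bernstein n \<alpha> \<beta> i = pc n \<alpha> \<beta> i"
  unfolding dual_bernstein_def
proof (rule the_equality)
  show "degree (pc n \<alpha> \<beta> i) \<le> n \<and>
    (\<forall>j\<le>n. jinner \<alpha> \<beta> (poly (pc n \<alpha> \<beta> i)) (bernstein n j) = (if i = j then 1 else 0))"
  proof
    show "degree (pc n \<alpha> \<beta> i) \<le> n" unfolding pc_def by (rule degree_comb)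
    show "\<forall>j\<le>n. jinner \<alpha> \<beta> (poly (pc n \<alpha> \<beta> i)) (bernstein n j) = (if i = j then 1 else 0)"
    proof (intro allI impI)
      fix j assume j: "j \<le> n"
      have "jinner \<alpha> \<beta> (poly (pc n \<alpha> \<beta> i)) (bernstein n j) = Jf \<alpha> \<beta> (pc n \<alpha> \<beta> i * bp n j)"
        unfolding bernstein_poly by (rule jinner_poly[OF a b])
      also have "\<dots> = (\<Sum>l\<le>n. c_coef1 n \<alpha> \<beta> i l * Gm \<alpha> \<beta> n l j)"
        unfolding pc_def by (rule Jf_comb)
      also have "\<dots> = (if i = j then 1 else 0)" by (rule exist1[OF a b i j])
      finally show "jinner \<alpha> \<beta> (poly (pc n \<alpha> \<beta> i)) (bernstein n j) = (if i = j then 1 else 0)" .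
    qed
  qed
next
  fix q assume q: "degree q \<le> n \<and> (\<forall>j\<le>n. jinner \<alpha> \<beta> (poly q) (bernstein n j) = (if i = j then 1 else 0))"
  have qs: "q = (\<Sum>l\<le>n. smult (bc n q l) (bp n l))" using q by (intro span) simp
  have h: "(\<Sum>l\<le>n. bc n q l * Gm \<alpha> \<beta> n l j) = (if i = j then 1 else 0)" if j: "j \<le> n" for j
  proof -
    have "(\<Sum>l\<le>n. bc n q l * Gm \<alpha> \<beta> n l j) = Jf \<alpha> \<beta> ((\<Sum>l\<le>n. smult (bc n q l) (bp n l)) * bp n j)"
      by (rule Jf_comb[symmetric])
    also have "\<dots> = Jf \<alpha> \<beta> (q * bp n j)" using qs by simp
    also have "\<dots> = jinner \<alpha> \<beta> (poly q) (bernstein n j)"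
      unfolding bernstein_poly by (rule jinner_poly[OF a b, symmetric])
    also have "\<dots> = (if i = j then 1 else 0)" using q j by simp
    finally show ?thesis .
  qed
  have "q = (\<Sum>l\<le>n. smult (c_coef1 n \<alpha> \<beta> i l) (bp n l))"
    by (subst qs) (intro sum.cong refl, simp add: coef_unique[OF a b i h])
  then show "q = pc n \<alpha> \<beta> i" unfolding pc_def .
qed

lemma part1:
  assumes a: "\<alpha> > -1" and b: "\<beta> > -1" and i: "i \<le> n"
  shows "poly (dual_bernstein n \<alpha> \<beta> i) x = (\<Sum>j\<le>n. c_coef1 n \<alpha> \<beta> i j * bernstein n j x)"
  unfolding dual_eq[OF a b i] pc_def by (simp add: poly_sum poly_bp)

lemma part2_from:
  assumes a: "\<alpha> > -1" and b: "\<beta> > -1" and i: "i \<le> n"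
    and h: "\<And>j. j \<le> n \<Longrightarrow> Jf \<alpha> \<beta> ((\<Sum>l\<le>n. smult (c_coef2 n \<alpha> \<beta> i l) (bp n l)) * bp n j) = (if i = j then 1 else 0)"
    and m: "m \<le> n"
  shows "c_coef1 n \<alpha> \<beta> i m = c_coef2 n \<alpha> \<beta> i m"
  using coef_unique[OF a b i _ m, of "c_coef2 n \<alpha> \<beta> i"] h by (simp add: Jf_comb)

lemma hsum_alg:
  fixes A Bq C D e F g H u Pm E :: real
  assumes "E = e * u" "u * u = 1" "C \<noteq> 0" "D \<noteq> 0" "g \<noteq> 0" "H \<noteq> 0" "Pm \<noteq> 0"
  shows "A * Bq / (C * D) * (e * (F / g) / H) = A / C * (E * F / (H * (u * Pm))) * (Pm * Bq / (g * D))"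
proof -
  have u: "u \<noteq> 0" using assms(2) by auto
  have "A / C * (E * F / (H * (u * Pm))) * (Pm * Bq / (g * D)) = A * (e * (u * u)) * F * Bq / (C * H * u * u * g * D)"
    using assms u by (simp add: field_simps)
  also have "\<dots> = A * e * F * Bq / (C * H * g * D)"
    using assms(2) u by (simp add: field_simps)
  also have "\<dots> = A * Bq / (C * D) * (e * (F / g) / H)"
    using assms by (simp add: field_simps)
  finally show ?thesis by simp
qed

lemma hsum_term:
  fixes \<alpha> \<beta> :: real
  assumes a: "\<alpha> > -1" and b: "\<beta> > -1" and ki: "k \<le> i" and "i \<le> n" and t: "t \<le> i - k"
  shows "pochhammer (- real i) (k + t) / pochhammer (- \<alpha> - real n) (k + t)
            * (pochhammer (real k - real n) (n - (k + t)) / pochhammer (\<alpha> + \<beta> + real k + 2) (n - (k + t)))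
       = pochhammer (- real i) k / pochhammer (- \<alpha> - real n) k
          * ((-1) ^ (n - k) * fact (n - k) / pochhammer (\<alpha> + \<beta> + real k + 2) (n - k))
          * (pochhammer (- (\<alpha> + \<beta> + 1) - real n) t * pochhammer (- real (i - k)) t
              / (fact t * pochhammer (real k - \<alpha> - real n) t))"
proof -
  have tn: "t \<le> n - k" using assms by simp
  have nz: "pochhammer (- \<alpha> - real n) j \<noteq> 0" if "j \<le> n" for j
  proof
    assume "pochhammer (- \<alpha> - real n) j = 0"
    then obtain q where "q < j" "- \<alpha> - real n = - real q" unfolding pochhammer_eq_0_iff by blast
    then have "\<alpha> = real q - real n" by simp
    moreover have "real q - real n \<le> -1" using \<open>q < j\<close> that by simp
    ultimately show False using a by simp
  qed
  have nz2: "pochhammer (real k - \<alpha> - real n) t \<noteq> 0"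
  proof
    assume "pochhammer (real k - \<alpha> - real n) t = 0"
    then obtain q where "q < t" "real k - \<alpha> - real n = - real q" unfolding pochhammer_eq_0_iff by blast
    then have "\<alpha> = real k + real q - real n" by simp
    moreover have "real k + real q - real n \<le> -1" using \<open>q < t\<close> assms by simp
    ultimately show False using a by simp
  qed
  have f1: "pochhammer (- real i) (k + t) = pochhammer (- real i) k * pochhammer (- real (i - k)) t"
    using pochhammer_product'[of "- real i" k t] ki by (simp add: of_nat_diff)
  have f2: "pochhammer (- \<alpha> - real n) (k + t) = pochhammer (- \<alpha> - real n) k * pochhammer (real k - \<alpha> - real n) t"
    using pochhammer_product'[of "- \<alpha> - real n" k t] by (simp add: algebra_simps)
  have f3: "pochhammer (real k - real n) (n - (k + t)) = (-1) ^ (n - k - t) * (fact (n - k) / fact t)"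
  proof -
    have e: "real k - real n = - real (n - k)" using assms by (simp add: of_nat_diff)
    have "pochhammer (real k - real n) (n - (k + t)) = pochhammer (- real (n - k)) (n - k - t)"
      by (simp only: e diff_diff_add)
    also have "\<dots> = (-1) ^ (n - k - t) * (fact (n - k - t) * real ((n - k) choose (n - k - t)))"
      by (simp only: poch_neg_nat mult.assoc)
    also have "fact (n - k - t) * real ((n - k) choose (n - k - t)) = fact (n - k) / fact (n - k - (n - k - t))"
      by (rule fact_binomial) simp
    also have "n - k - (n - k - t) = t" using tn by simp
    finally show ?thesis .
  qed
  define c0 where "c0 = \<alpha> + \<beta> + real k + 2"
  have c0p: "c0 > 0" using a b by (simp add: c0_def)
  have f4: "pochhammer c0 (n - k) = pochhammer c0 (n - (k + t)) * ((-1) ^ t * pochhammer (- (\<alpha> + \<beta> + 1) - real n) t)"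
  proof -
    have "pochhammer c0 (n - (k + t) + t) = pochhammer c0 (n - (k + t)) * pochhammer (c0 + real (n - (k + t))) t"
      by (rule pochhammer_product')
    moreover have "n - (k + t) + t = n - k" using tn by simp
    moreover have "pochhammer (c0 + real (n - (k + t))) t = (-1) ^ t * pochhammer (- (\<alpha> + \<beta> + 1) - real n) t"
    proof -
      have "c0 + real (n - (k + t)) = (c0 + real (n - k) - 1) - real t + 1" using tn assms by (simp add: of_nat_diff)
      then have "pochhammer (c0 + real (n - (k + t))) t = (-1) ^ t * pochhammer (- (c0 + real (n - k) - 1)) t"
        by (simp only: pochhammer_minus')
      moreover have eB: "- (c0 + real (n - k) - 1) = - (\<alpha> + \<beta> + 1) - real n"
        using assms by (simp add: c0_def of_nat_diff)
      ultimately show ?thesis by metis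
    qed
    ultimately show ?thesis by simp
  qed
  have p1: "pochhammer c0 (n - (k + t)) > 0" "pochhammer c0 (n - k) > 0" using c0p by (auto intro!: poch_pos)
  have sg: "(-1::real) ^ (n - k - t) * (-1) ^ t = (-1) ^ (n - k)"
  proof -
    have "n - k - t + t = n - k" using tn by simp
    then show ?thesis by (simp add: power_add[symmetric])
  qed
  have sg2: "((-1::real) ^ t) * ((-1) ^ t) = 1"
    by (simp add: power_add[symmetric] flip: mult_2)
  have Pm: "pochhammer (- (\<alpha> + \<beta> + 1) - real n) t \<noteq> 0" using p1(2) unfolding f4 by auto
  show ?thesis
    unfolding f1 f2 f3 c0_def[symmetric] f4
    by (rule hsum_alg[OF sg[symmetric] sg2 nz[of k] nz2 _ _ Pm]) (use p1 \<open>i \<le> n\<close> ki in auto)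
qed

lemma hsum:
  fixes \<alpha> \<beta> :: real
  assumes a: "\<alpha> > -1" and b: "\<beta> > -1" and kn: "k \<le> n" and i: "i \<le> n"
  shows "(\<Sum>h\<le>i. pochhammer (- real i) h / pochhammer (- \<alpha> - real n) h
            * (pochhammer (real k - real n) (n - h) / pochhammer (\<alpha> + \<beta> + real k + 2) (n - h)))
    = (if k \<le> i then pochhammer (- real i) k / pochhammer (- \<alpha> - real n) k
          * ((-1) ^ (n - k) * fact (n - k) / pochhammer (\<alpha> + \<beta> + real k + 2) (n - k))
          * (pochhammer (real k + \<beta> + 1) (i - k) / pochhammer (real k - \<alpha> - real n) (i - k)) else 0)"
proof -
  let ?f = "\<lambda>h. pochhammer (- real i) h / pochhammer (- \<alpha> - real n) h
            * (pochhammer (real k - real n) (n - h) / pochhammer (\<alpha> + \<beta> + real k + 2) (n - h))"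
  have z: "?f h = 0" if "h < k" for h
  proof -
    have "pochhammer (real k - real n) (n - h) = 0"
      unfolding pochhammer_eq_0_iff using that kn by (intro exI[of _ "n - k"]) auto
    then show ?thesis by simp
  qed
  show ?thesis
  proof (cases "k \<le> i")
    case False
    have "(\<Sum>h\<le>i. ?f h) = 0"
      by (intro sum.neutral ballI z) (use False in auto)
    then show ?thesis using False by simp
  next
    case True
    have "(\<Sum>h\<le>i. ?f h) = (\<Sum>t\<le>i - k. ?f (k + t))"
      by (rule sum_shift_from[OF True z])
    also have "\<dots> = (\<Sum>t\<le>i - k. pochhammer (- real i) k / pochhammer (- \<alpha> - real n) k
          * ((-1) ^ (n - k) * fact (n - k) / pochhammer (\<alpha> + \<beta> + real k + 2) (n - k))
          * (pochhammer (- (\<alpha> + \<beta> + 1) - real n) t * pochhammer (- real (i - k)) t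
              / (fact t * pochhammer (real k - \<alpha> - real n) t)))"
      by (intro sum.cong refl hsum_term[OF a b True i]) simp
    also have "\<dots> = pochhammer (- real i) k / pochhammer (- \<alpha> - real n) k
          * ((-1) ^ (n - k) * fact (n - k) / pochhammer (\<alpha> + \<beta> + real k + 2) (n - k))
          * (\<Sum>t\<le>i - k. pochhammer (- (\<alpha> + \<beta> + 1) - real n) t * pochhammer (- real (i - k)) t
              / (fact t * pochhammer (real k - \<alpha> - real n) t))"
      by (simp add: sum_distrib_left)
    also have "(\<Sum>t\<le>i - k. pochhammer (- (\<alpha> + \<beta> + 1) - real n) t * pochhammer (- real (i - k)) t
              / (fact t * pochhammer (real k - \<alpha> - real n) t))
        = pochhammer ((real k - \<alpha> - real n) - (- (\<alpha> + \<beta> + 1) - real n)) (i - k) / pochhammer (real k - \<alpha> - real n) (i - k)"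
    proof (rule vdm)
      fix q assume q: "q < i - k"
      show "real k - \<alpha> - real n \<noteq> - real q"
      proof
        assume "real k - \<alpha> - real n = - real q"
        then have "\<alpha> = real k + real q - real n" by simp
        moreover have "real k + real q - real n \<le> -1" using q i by simp
        ultimately show False using a by simp
      qed
    qed
    also have "(real k - \<alpha> - real n) - (- (\<alpha> + \<beta> + 1) - real n) = real k + \<beta> + 1" by simp
    finally show ?thesis using True by simp
  qed
qed

definition acf2 :: "real \<Rightarrow> real \<Rightarrow> nat \<Rightarrow> nat \<Rightarrow> nat \<Rightarrow> real" where
  "acf2 \<alpha> \<beta> n h r = pochhammer (- real (n - h)) r * pochhammer (real (n - h) + \<alpha> + (\<beta> + real h + 1) + 1) r
     / (fact r * pochhammer (\<alpha> + 1) r)"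

definition PP2 :: "real \<Rightarrow> real \<Rightarrow> nat \<Rightarrow> nat \<Rightarrow> real poly" where
  "PP2 \<alpha> \<beta> n h = (\<Sum>r\<le>n - h. smult (acf2 \<alpha> \<beta> n h r) ([:1, -1:] ^ r))"

lemma M3:
  assumes a: "\<alpha> > -1" and b: "\<beta> > -1" and h: "h \<le> n"
  shows "Jf \<alpha> \<beta> (PP2 \<alpha> \<beta> n h * monom 1 k) = Beta (\<alpha> + 1) (\<beta> + 1) * pochhammer (\<beta> + 1) k / pochhammer (\<alpha> + \<beta> + 2) k
      * (pochhammer (real k - real n) (n - h) / pochhammer (\<alpha> + \<beta> + real k + 2) (n - h))"
proof -
  let ?B = "Beta (\<alpha> + 1) (\<beta> + 1)"
  have "PP2 \<alpha> \<beta> n h * monom 1 k = (\<Sum>r\<le>n - h. smult (acf2 \<alpha> \<beta> n h r) ([:1, -1:] ^ r * monom 1 k))"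
    unfolding PP2_def sum_distrib_right by simp
  then have "Jf \<alpha> \<beta> (PP2 \<alpha> \<beta> n h * monom 1 k) = (\<Sum>r\<le>n - h. acf2 \<alpha> \<beta> n h r * Beta (\<alpha> + real r + 1) (\<beta> + real k + 1))"
    by (simp add: Jf_sum Jf_smult Jf_beta[OF a b])
  also have "\<dots> = (\<Sum>r\<le>n - h. ?B * pochhammer (\<beta> + 1) k / pochhammer (\<alpha> + \<beta> + 2) k *
        (pochhammer (real (n - h) + \<alpha> + (\<beta> + real h + 1) + 1) r * pochhammer (- real (n - h)) r / (fact r * pochhammer (\<alpha> + \<beta> + real k + 2) r)))"
  proof (intro sum.cong refl)
    fix r
    have B: "Beta (\<alpha> + real r + 1) (\<beta> + real k + 1) = ?B * pochhammer (\<alpha> + 1) r * pochhammer (\<beta> + 1) k / pochhammer (\<alpha> + \<beta> + 2) (r + k)"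
      using Beta_shift[of "\<alpha> + 1" "\<beta> + 1" r k] a b by (simp add: add_ac)
    have P: "pochhammer (\<alpha> + \<beta> + 2) (r + k) = pochhammer (\<alpha> + \<beta> + 2) k * pochhammer (\<alpha> + \<beta> + real k + 2) r"
      using pochhammer_product'[of "\<alpha> + \<beta> + 2" k r] by (simp add: add_ac)
    have "pochhammer (\<alpha> + 1) r > 0" "pochhammer (\<alpha> + \<beta> + 2) k > 0" "pochhammer (\<alpha> + \<beta> + real k + 2) r > 0"
      using a b by (auto intro!: poch_pos)
    then show "acf2 \<alpha> \<beta> n h r * Beta (\<alpha> + real r + 1) (\<beta> + real k + 1) = ?B * pochhammer (\<beta> + 1) k / pochhammer (\<alpha> + \<beta> + 2) k *
        (pochhammer (real (n - h) + \<alpha> + (\<beta> + real h + 1) + 1) r * pochhammer (- real (n - h)) r / (fact r * pochhammer (\<alpha> + \<beta> + real k + 2) r))"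
      unfolding B P acf2_def by (simp add: field_simps)
  qed
  also have "\<dots> = ?B * pochhammer (\<beta> + 1) k / pochhammer (\<alpha> + \<beta> + 2) k *
        (\<Sum>r\<le>n - h. pochhammer (real (n - h) + \<alpha> + (\<beta> + real h + 1) + 1) r * pochhammer (- real (n - h)) r / (fact r * pochhammer (\<alpha> + \<beta> + real k + 2) r))"
    by (simp add: sum_distrib_left)
  also have "(\<Sum>r\<le>n - h. pochhammer (real (n - h) + \<alpha> + (\<beta> + real h + 1) + 1) r * pochhammer (- real (n - h)) r / (fact r * pochhammer (\<alpha> + \<beta> + real k + 2) r))
      = pochhammer ((\<alpha> + \<beta> + real k + 2) - (real (n - h) + \<alpha> + (\<beta> + real h + 1) + 1)) (n - h) / pochhammer (\<alpha> + \<beta> + real k + 2) (n - h)"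
    using a b by (intro vdm) auto
  also have "(\<alpha> + \<beta> + real k + 2) - (real (n - h) + \<alpha> + (\<beta> + real h + 1) + 1) = real k - real n"
    using h by (simp add: of_nat_diff)
  finally show ?thesis .
qed

lemma stepA2:
  assumes h: "h \<le> n"
  shows "(\<Sum>j\<le>n. hahnQ (n - h) (real n - real j) \<alpha> (\<beta> + real h + 1) n * bernstein n j x) = poly (PP2 \<alpha> \<beta> n h) x"
proof -
  have "(\<Sum>j\<le>n. hahnQ (n - h) (real n - real j) \<alpha> (\<beta> + real h + 1) n * bernstein n j x)
      = (\<Sum>j\<le>n. \<Sum>r\<le>n - h. acf2 \<alpha> \<beta> n h r / pochhammer (- real n) r * (pochhammer (- real (n - j)) r * bernstein n j x))"
  proof (intro sum.cong refl)
    fix j assume "j \<in> {..n}"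
    then have e: "- (real n - real j) = - real (n - j)" by (simp add: of_nat_diff)
    show "hahnQ (n - h) (real n - real j) \<alpha> (\<beta> + real h + 1) n * bernstein n j x
        = (\<Sum>r\<le>n - h. acf2 \<alpha> \<beta> n h r / pochhammer (- real n) r * (pochhammer (- real (n - j)) r * bernstein n j x))"
      unfolding hahnQ_def acf2_def sum_distrib_right e
      by (intro sum.cong refl) (simp add: mult_ac)
  qed
  also have "\<dots> = (\<Sum>r\<le>n - h. acf2 \<alpha> \<beta> n h r / pochhammer (- real n) r * (\<Sum>j\<le>n. pochhammer (- real (n - j)) r * bernstein n j x))"
    by (subst sum.swap) (simp add: sum_distrib_left)
  also have "\<dots> = (\<Sum>r\<le>n - h. acf2 \<alpha> \<beta> n h r * (1 - x) ^ r)"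
  proof (intro sum.cong refl)
    fix r assume "r \<in> {..n - h}"
    then have r: "r \<le> n" by simp
    show "acf2 \<alpha> \<beta> n h r / pochhammer (- real n) r * (\<Sum>j\<le>n. pochhammer (- real (n - j)) r * bernstein n j x)
        = acf2 \<alpha> \<beta> n h r * (1 - x) ^ r"
      unfolding fact1_mirror[OF r] using poch_negn_nz[OF r] by simp
  qed
  also have "\<dots> = poly (PP2 \<alpha> \<beta> n h) x"
    unfolding PP2_def by (simp add: poly_sum)
  finally show ?thesis .
qed

definition pc2 :: "nat \<Rightarrow> real \<Rightarrow> real \<Rightarrow> nat \<Rightarrow> real poly" where
  "pc2 n \<alpha> \<beta> i = (\<Sum>j\<le>n. smult (c_coef2 n \<alpha> \<beta> i j) (bp n j))"

definition Kc :: "nat \<Rightarrow> real \<Rightarrow> real \<Rightarrow> nat \<Rightarrow> real" where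
  "Kc n \<alpha> \<beta> i = (-1) ^ n * pochhammer (\<alpha> + \<beta> + 2) n * pochhammer (- \<alpha> - real n) i
      / (Beta (\<alpha> + 1) (\<beta> + 1) * fact n * pochhammer (\<beta> + 1) i)"

lemma pc2_eq:
  assumes i: "i \<le> n"
  shows "pc2 n \<alpha> \<beta> i = smult (Kc n \<alpha> \<beta> i) (\<Sum>h\<le>i. smult (pochhammer (- real i) h / pochhammer (- \<alpha> - real n) h) (PP2 \<alpha> \<beta> n h))"
proof -
  have "poly (pc2 n \<alpha> \<beta> i) x = poly (smult (Kc n \<alpha> \<beta> i) (\<Sum>h\<le>i. smult (pochhammer (- real i) h / pochhammer (- \<alpha> - real n) h) (PP2 \<alpha> \<beta> n h))) x" for x
  proof -
    have "poly (pc2 n \<alpha> \<beta> i) x = (\<Sum>j\<le>n. c_coef2 n \<alpha> \<beta> i j * bernstein n j x)"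
      unfolding pc2_def by (simp add: poly_sum poly_bp)
    also have "\<dots> = (\<Sum>j\<le>n. \<Sum>h\<le>i. Kc n \<alpha> \<beta> i * (pochhammer (- real i) h / pochhammer (- \<alpha> - real n) h) *
          (hahnQ (n - h) (real n - real j) \<alpha> (\<beta> + real h + 1) n * bernstein n j x))"
      unfolding c_coef2_def Kc_def sum_distrib_right sum_distrib_left
      by (intro sum.cong refl) (simp add: mult_ac)
    also have "\<dots> = (\<Sum>h\<le>i. \<Sum>j\<le>n. Kc n \<alpha> \<beta> i * (pochhammer (- real i) h / pochhammer (- \<alpha> - real n) h) *
          (hahnQ (n - h) (real n - real j) \<alpha> (\<beta> + real h + 1) n * bernstein n j x))"
      by (rule sum.swap)
    also have "\<dots> = (\<Sum>h\<le>i. Kc n \<alpha> \<beta> i * (pochhammer (- real i) h / pochhammer (- \<alpha> - real n) h) * poly (PP2 \<alpha> \<beta> n h) x)"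
    proof (intro sum.cong refl)
      fix h assume "h \<in> {..i}"
      then have "h \<le> n" using i by simp
      then show "(\<Sum>j\<le>n. Kc n \<alpha> \<beta> i * (pochhammer (- real i) h / pochhammer (- \<alpha> - real n) h) *
          (hahnQ (n - h) (real n - real j) \<alpha> (\<beta> + real h + 1) n * bernstein n j x))
          = Kc n \<alpha> \<beta> i * (pochhammer (- real i) h / pochhammer (- \<alpha> - real n) h) * poly (PP2 \<alpha> \<beta> n h) x"
        by (simp only: sum_distrib_left[symmetric] stepA2)
    qed
    finally show ?thesis by (simp add: poly_sum sum_distrib_left mult_ac)
  qed
  then show ?thesis by (simp add: poly_eq_poly_eq_iff[symmetric] fun_eq_iff)
qed

lemma fin_alg:
  fixes sk snk X1 X2 Y1 Y2 Z1 Z2 B fn fnk Pi :: real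
  assumes "X1 \<noteq> 0" "X2 \<noteq> 0" "Y1 \<noteq> 0" "Y2 \<noteq> 0" "Z1 \<noteq> 0" "Z2 \<noteq> 0" "B \<noteq> 0" "fn \<noteq> 0" "fnk \<noteq> 0"
    "sk * sk = 1" "snk * snk = 1"
  shows "(sk * snk) * (X1 * X2) * (Y1 * Y2) / (B * fn * (Z1 * Z2)) * (B * Z1 / X1 * (Pi / Y1 * (snk * fnk / X2) * (Z2 / Y2)))
     = Pi / (sk * (fn / fnk))"
proof -
  have sk: "sk \<noteq> 0" using assms(10) by auto
  have "(sk * snk) * (X1 * X2) * (Y1 * Y2) / (B * fn * (Z1 * Z2)) * (B * Z1 / X1 * (Pi / Y1 * (snk * fnk / X2) * (Z2 / Y2)))
      = sk * (snk * snk) * Pi * fnk / fn"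
    using assms by (simp add: field_simps)
  also have "\<dots> = sk * Pi * fnk / fn" using assms(11) by simp
  also have "\<dots> = (sk * sk) * Pi / (sk * (fn / fnk))" using sk assms by (simp add: field_simps)
  also have "\<dots> = Pi / (sk * (fn / fnk))" using assms(10) by simp
  finally show ?thesis .
qed

lemma stepC2:
  assumes a: "\<alpha> > -1" and b: "\<beta> > -1" and i: "i \<le> n" and kn: "k \<le> n"
  shows "Jf \<alpha> \<beta> (pc2 n \<alpha> \<beta> i * monom 1 k) = pochhammer (- real i) k / pochhammer (- real n) k"
proof -
  define B where "B = Beta (\<alpha> + 1) (\<beta> + 1)"
  have Bp: "B > 0" unfolding B_def using a b by (intro Beta_pos) auto
  have "pc2 n \<alpha> \<beta> i * monom 1 k = smult (Kc n \<alpha> \<beta> i) (\<Sum>h\<le>i. smult (pochhammer (- real i) h / pochhammer (- \<alpha> - real n) h) (PP2 \<alpha> \<beta> n h * monom 1 k))"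
    unfolding pc2_eq[OF i] by (simp add: sum_distrib_right)
  then have "Jf \<alpha> \<beta> (pc2 n \<alpha> \<beta> i * monom 1 k) = Kc n \<alpha> \<beta> i * (\<Sum>h\<le>i. pochhammer (- real i) h / pochhammer (- \<alpha> - real n) h * Jf \<alpha> \<beta> (PP2 \<alpha> \<beta> n h * monom 1 k))"
    by (simp add: Jf_smult Jf_sum)
  also have "\<dots> = Kc n \<alpha> \<beta> i * (B * pochhammer (\<beta> + 1) k / pochhammer (\<alpha> + \<beta> + 2) k *
       (\<Sum>h\<le>i. pochhammer (- real i) h / pochhammer (- \<alpha> - real n) h
            * (pochhammer (real k - real n) (n - h) / pochhammer (\<alpha> + \<beta> + real k + 2) (n - h))))"
  proof -
    have "(\<Sum>h\<le>i. pochhammer (- real i) h / pochhammer (- \<alpha> - real n) h * Jf \<alpha> \<beta> (PP2 \<alpha> \<beta> n h * monom 1 k))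
      = (\<Sum>h\<le>i. B * pochhammer (\<beta> + 1) k / pochhammer (\<alpha> + \<beta> + 2) k * (pochhammer (- real i) h / pochhammer (- \<alpha> - real n) h
            * (pochhammer (real k - real n) (n - h) / pochhammer (\<alpha> + \<beta> + real k + 2) (n - h))))"
    proof (intro sum.cong refl)
      fix h assume "h \<in> {..i}"
      then have h: "h \<le> n" using i by simp
      show "pochhammer (- real i) h / pochhammer (- \<alpha> - real n) h * Jf \<alpha> \<beta> (PP2 \<alpha> \<beta> n h * monom 1 k)
        = B * pochhammer (\<beta> + 1) k / pochhammer (\<alpha> + \<beta> + 2) k * (pochhammer (- real i) h / pochhammer (- \<alpha> - real n) h
            * (pochhammer (real k - real n) (n - h) / pochhammer (\<alpha> + \<beta> + real k + 2) (n - h)))"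
        unfolding M3[OF a b h] B_def by (simp add: mult_ac)
    qed
    then show ?thesis by (simp add: sum_distrib_left)
  qed
  also have "\<dots> = pochhammer (- real i) k / pochhammer (- real n) k"
  proof (cases "k \<le> i")
    case False
    then have "pochhammer (- real i) k = 0"
      using pochhammer_of_nat_eq_0_iff[of i k, where 'a=real] by simp
    then show ?thesis unfolding hsum[OF a b kn i] using False by simp
  next
    case True
    have e1: "pochhammer (\<alpha> + \<beta> + 2) n = pochhammer (\<alpha> + \<beta> + 2) k * pochhammer (\<alpha> + \<beta> + real k + 2) (n - k)"
      using pochhammer_product[OF kn, of "\<alpha> + \<beta> + 2"] by (simp add: add_ac)
    have e2: "pochhammer (- \<alpha> - real n) i = pochhammer (- \<alpha> - real n) k * pochhammer (real k - \<alpha> - real n) (i - k)"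
      using pochhammer_product[OF True, of "- \<alpha> - real n"] by (simp add: algebra_simps)
    have e3: "pochhammer (\<beta> + 1) i = pochhammer (\<beta> + 1) k * pochhammer (real k + \<beta> + 1) (i - k)"
      using pochhammer_product[OF True, of "\<beta> + 1"] by (simp add: add_ac)
    have e4: "pochhammer (- real n) k = (-1) ^ k * (fact n / fact (n - k))"
      by (simp add: poch_neg_nat fact_binomial[OF kn] mult.assoc)
    have e5: "((-1)::real) ^ n = (-1) ^ k * (-1) ^ (n - k)"
      using kn by (simp add: power_add[symmetric])
    have nzY: "pochhammer (- \<alpha> - real n) j \<noteq> 0" if "j \<le> n" for j
    proof
      assume "pochhammer (- \<alpha> - real n) j = 0"
      then obtain q where "q < j" "- \<alpha> - real n = - real q" unfolding pochhammer_eq_0_iff by blast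
      then have "\<alpha> = real q - real n" by simp
      moreover have "real q - real n \<le> -1" using \<open>q < j\<close> that by simp
      ultimately show False using a by simp
    qed
    have nzY2: "pochhammer (real k - \<alpha> - real n) (i - k) \<noteq> 0"
      using e2 nzY[of i] i by auto
    have pos: "pochhammer (\<alpha> + \<beta> + 2) k > 0" "pochhammer (\<alpha> + \<beta> + real k + 2) (n - k) > 0"
      "pochhammer (\<beta> + 1) k > 0" "pochhammer (real k + \<beta> + 1) (i - k) > 0"
      using a b by (auto intro!: poch_pos)
    have s1: "((-1)::real) ^ k * (-1) ^ k = 1" by (simp add: power_add[symmetric] flip: mult_2)
    have s2: "((-1)::real) ^ (n - k) * (-1) ^ (n - k) = 1" by (simp add: power_add[symmetric] flip: mult_2)
    show ?thesis
      unfolding hsum[OF a b kn i] if_P[OF True] Kc_def B_def[symmetric] e1 e2 e3 e4 e5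
      by (rule fin_alg) (use pos nzY[OF kn] nzY2 Bp s1 s2 in auto)
  qed
  finally show ?thesis .
qed

lemma part2:
  assumes a: "\<alpha> > -1" and b: "\<beta> > -1" and i: "i \<le> n" and m: "m \<le> n"
  shows "c_coef1 n \<alpha> \<beta> i m = c_coef2 n \<alpha> \<beta> i m"
proof (rule part2_from[OF a b i _ m])
  fix j assume j: "j \<le> n"
  show "Jf \<alpha> \<beta> ((\<Sum>l\<le>n. smult (c_coef2 n \<alpha> \<beta> i l) (bp n l)) * bp n j) = (if i = j then 1 else 0)"
    using stepD[OF stepC2[OF a b i] j i] unfolding pc2_def by simp
qed

theorem theorem2p1:
  fixes n :: nat and \<alpha> \<beta> :: real
  assumes "\<alpha> > -1" and "\<beta> > -1" and "i \<le> n"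
  shows "(\<forall>x. poly (dual_bernstein n \<alpha> \<beta> i) x = (\<Sum>j\<le>n. c_coef1 n \<alpha> \<beta> i j * bernstein n j x))
       \<and> (\<forall>j\<le>n. c_coef1 n \<alpha> \<beta> i j = c_coef2 n \<alpha> \<beta> i j)"
  using part1[OF assms] part2[OF assms] by blast

end
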